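(* Let $\{X_s,\|\cdot\|_s\}_{s\in\mathbb N_0}$ be a sequence of Banach spaces satisfying (F1)–(F3), let $\{\Theta_s\}_{s\in\mathbb N_0}$ be a sequence of $CB$-spaces satisfying (F1)–(F3), and let $\{g_i\}_{i=1}^\infty\in (X_F^* )^{\mathbb N}$ be an $F$-Bessel sequence for $X_F$ with respect to $\Theta_F$. Then: (a) there exists $\{f_i\}_{i=1}^\infty\in(X_F)^{\mathbb N}$ which is a $DF$-Bessel sequence for $X_F^*$ with respect to $\Theta_F^*$ and satisfies $f=\sum_{i=1}^\infty g_i(f)f_i$ for all $f\in X_F$ (convergence in $X_F$) if and only if $\{g_i\}$ is an $F$-frame for $X_F$ with respect to $\Theta_F$; (b) if $\{f_i\}\in(X_F)^{\mathbb N}$ is a $DF$-Bessel sequence for $X_F^*$ with respect to $\Theta_F^*$ with $f=\sum_{i=1}^\infty g_i(f)f_i$ for all $f\in X_F$, then: if all $\Theta_s$ and $\Theta_s^*$ are $CB$-spaces, $\{f_i\}$ is a pre-$DF$-frame for $X_F^*$ with respect to $\Theta_F^*$; and if all $\Theta_s$ are reflexive $CB$-spaces, $\{f_i\}$ is a $DF$-frame for $X_F^*$ with respect to $\Theta_F^*$.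
   Context: Conditions (F1)–(F3) for a sequence $\{Y_s,|\cdot|_s\}_{s\in\mathbb N_0}$ of separable Banach spaces: (F1) $\{0\}\neq\bigcap_sY_s\subseteq\dots\subseteq Y_1\subseteq Y_0$; (F2) $|\cdot|_0\le|\cdot|_1\le\dots$; (F3) $Y_F:=\bigcap_sY_s$ dense in each $Y_s$. $X_F=\bigcap_sX_s$, $\Theta_F=\bigcap_s\Theta_s$. $BK$-space: Banach sequence space with continuous coordinate functionals; $CB$-space: $BK$-space in which the canonical vectors $e_i$ form a Schauder basis. For a $CB$-space $\Theta$, $\Theta^*$ is identified with the $BK$-space $\{\{g(e_i)\}_{i=1}^\infty:g\in\Theta^*\}$ normed by $|||\{g(e_i)\}|||:=\|g\|_{\Theta^*}$. For a Banach space $X$ and $BK$-space $\Theta$: $\{g_i\}\subset X^*$ is a $\Theta$-Bessel sequence if $\{g_i(f)\}\in\Theta$ and $|||\{g_i(f)\}|||\le B\|f\|$ for all $f\in X$; a $\Theta$-frame if moreover $A\|f\|\le|||\{g_i(f)\}|||$ with $A>0$; a Banach frame w.r.t. $\Theta$ if it is a $\Theta$-frame and there is a bounded $V:\Theta\to X$ with $V(\{g_i(f)\})=f$. (For $\{f_i\}\subset X\subseteq X^{**}$ these are applied to $X^*$ via $g\mapsto\{g(f_i)\}$.) $F$-Bessel sequence / pre-$F$-frame / $F$-frame: $\{g_i\}\in(X_F^* )^{\mathbb N}$ with $\{g_i(f)\}\in\Theta_F$ for $f\in X_F$ and for each $s$ a constant $B_s$ with $|||\{g_i(f)\}|||_s\le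 B_s\|f\|_s$ ($F$-Bessel); plus $A_s\|f\|_s\le|||\{g_i(f)\}|||_s$, $A_s>0$ (pre-$F$-frame); plus an $F$-bounded $V:\Theta_F\to X_F$ with $V(\{g_i(f)\})=f$ for $f\in X_F$ ($F$-frame), $F$-bounded meaning $\|Vc\|_s\le K_s|||c|||_s$ for every $s$. $\{f_i\}\in(X_F)^{\mathbb N}$ is a $DF$-Bessel sequence (resp. pre-$DF$-frame, resp. $DF$-frame) for $X_F^*$ w.r.t. $\Theta_F^*$ if for every $s$ it is a $\Theta_s^*$-Bessel sequence (resp. $\Theta_s^*$-frame, resp. Banach frame w.r.t. $\Theta_s^*$) for $X_s^*$. *)

theory Defs
  imports "HOL-Analysis.Analysis" "HOL-Library.Function_Algebras"
begin

instantiation "fun" :: (type, real_vector) real_vector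
begin
definition scaleR_fun :: "real \<Rightarrow> ('a \<Rightarrow> 'b) \<Rightarrow> 'a \<Rightarrow> 'b"
  where "scaleR_fun c f = (\<lambda>x. c *\<^sub>R f x)"
instance
  by standard (simp_all add: scaleR_fun_def fun_eq_iff scaleR_add_right scaleR_add_left)
end

definition lin_on :: "'a::real_vector set \<Rightarrow> ('a \<Rightarrow> 'b::real_vector) \<Rightarrow> bool" where
  "lin_on S T \<longleftrightarrow> (\<forall>x\<in>S. \<forall>y\<in>S. T (x + y) = T x + T y) \<and> (\<forall>c. \<forall>x\<in>S. T (c *\<^sub>R x) = c *\<^sub>R T x)"

definition normed_on :: "'a::real_vector set \<Rightarrow> ('a \<Rightarrow> real) \<Rightarrow> bool" where
  "normed_on S n \<longleftrightarrow> 0 \<in> S \<and> (\<forall>x\<in>S. \<forall>y\<in>S. x + y \<in> S) \<and> (\<forall>c. \<forall>x\<in>S. c *\<^sub>R x \<in> S)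
     \<and> (\<forall>x\<in>S. n x \<ge> 0 \<and> (n x = 0 \<longleftrightarrow> x = 0))
     \<and> (\<forall>c. \<forall>x\<in>S. n (c *\<^sub>R x) = \<bar>c\<bar> * n x)
     \<and> (\<forall>x\<in>S. \<forall>y\<in>S. n (x + y) \<le> n x + n y)"

definition complete_on :: "'a::real_vector set \<Rightarrow> ('a \<Rightarrow> real) \<Rightarrow> bool" where
  "complete_on S n \<longleftrightarrow> (\<forall>u. (\<forall>k. u k \<in> S) \<and> (\<forall>\<epsilon>>0. \<exists>N. \<forall>m\<ge>N. \<forall>k\<ge>N. n (u m - u k) < \<epsilon>)
        \<longrightarrow> (\<exists>x\<in>S. (\<lambda>k. n (u k - x)) \<longlonglongrightarrow> 0))"

definition banach_on :: "'a::real_vector set \<Rightarrow> ('a \<Rightarrow> real) \<Rightarrow> bool" where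
  "banach_on S n \<longleftrightarrow> normed_on S n \<and> complete_on S n"

definition separable_on :: "'a::real_vector set \<Rightarrow> ('a \<Rightarrow> real) \<Rightarrow> bool" where
  "separable_on S n \<longleftrightarrow> (\<exists>D. countable D \<and> D \<subseteq> S \<and> (\<forall>x\<in>S. \<forall>\<epsilon>>0. \<exists>d\<in>D. n (x - d) < \<epsilon>))"

text \<open>Dual space: bounded linear functionals on S, canonically represented as
  functions vanishing outside S.\<close>
definition dual_on :: "'a::real_vector set \<Rightarrow> ('a \<Rightarrow> real) \<Rightarrow> ('a \<Rightarrow> real) set" where
  "dual_on S n = {g. lin_on S g \<and> (\<exists>C. \<forall>x\<in>S. \<bar>g x\<bar> \<le> C * n x) \<and> (\<forall>x. x \<notin> S \<longrightarrow> g x = 0)}"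

definition opnorm :: "'a::real_vector set \<Rightarrow> ('a \<Rightarrow> real) \<Rightarrow> ('a \<Rightarrow> real) \<Rightarrow> real" where
  "opnorm S n g = Sup {\<bar>g x\<bar> | x. x \<in> S \<and> n x \<le> 1}"

definition reflexive_on :: "'a::real_vector set \<Rightarrow> ('a \<Rightarrow> real) \<Rightarrow> bool" where
  "reflexive_on S n \<longleftrightarrow> (\<forall>\<Phi>\<in>dual_on (dual_on S n) (opnorm S n). \<exists>x\<in>S. \<forall>g\<in>dual_on S n. \<Phi> g = g x)"

section \<open>Sequence spaces (indices start at 0)\<close>

definition unitvec :: "nat \<Rightarrow> nat \<Rightarrow> real" where
  "unitvec i = (\<lambda>j. if j = i then 1 else 0)"

definition bk_space :: "(nat \<Rightarrow> real) set \<Rightarrow> ((nat \<Rightarrow> real) \<Rightarrow> real) \<Rightarrow> bool" where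
  "bk_space T n \<longleftrightarrow> banach_on T n \<and> (\<forall>i. \<exists>K. \<forall>c\<in>T. \<bar>c i\<bar> \<le> K * n c)"

definition cb_space :: "(nat \<Rightarrow> real) set \<Rightarrow> ((nat \<Rightarrow> real) \<Rightarrow> real) \<Rightarrow> bool" where
  "cb_space T n \<longleftrightarrow> bk_space T n \<and> (\<forall>i. unitvec i \<in> T)
     \<and> (\<forall>c\<in>T. (\<lambda>k. n (c - (\<Sum>i<k. c i *\<^sub>R unitvec i))) \<longlonglongrightarrow> 0)"

text \<open>The dual of a CB-space identified with the sequence space of values on unit vectors.\<close>
definition seqdual :: "(nat \<Rightarrow> real) set \<Rightarrow> ((nat \<Rightarrow> real) \<Rightarrow> real) \<Rightarrow> (nat \<Rightarrow> real) set" where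
  "seqdual T n = {d. \<exists>g\<in>dual_on T n. \<forall>i. d i = g (unitvec i)}"

definition seqdual_norm :: "(nat \<Rightarrow> real) set \<Rightarrow> ((nat \<Rightarrow> real) \<Rightarrow> real) \<Rightarrow> (nat \<Rightarrow> real) \<Rightarrow> real" where
  "seqdual_norm T n d = opnorm T n (SOME g. g \<in> dual_on T n \<and> (\<forall>i. d i = g (unitvec i)))"

definition F_seq :: "(nat \<Rightarrow> 'a::real_vector set) \<Rightarrow> (nat \<Rightarrow> 'a \<Rightarrow> real) \<Rightarrow> bool" where
  "F_seq Y n \<longleftrightarrow> (\<forall>s. banach_on (Y s) (n s) \<and> separable_on (Y s) (n s))
     \<and> (\<Inter>s. Y s) \<noteq> {0} \<and> (\<forall>s. Y (Suc s) \<subseteq> Y s)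
     \<and> (\<forall>s. \<forall>x\<in>Y (Suc s). n s x \<le> n (Suc s) x)
     \<and> (\<forall>s. \<forall>x\<in>Y s. \<forall>\<epsilon>>0. \<exists>y\<in>(\<Inter>t. Y t). n s (x - y) < \<epsilon>)"

text \<open>phi maps an element x of the space to its coefficient sequence.\<close>
definition bessel_cond :: "'x::real_vector set \<Rightarrow> ('x \<Rightarrow> real) \<Rightarrow> (nat \<Rightarrow> real) set \<Rightarrow> ((nat \<Rightarrow> real) \<Rightarrow> real) \<Rightarrow> ('x \<Rightarrow> nat \<Rightarrow> real) \<Rightarrow> bool" where
  "bessel_cond X nX T nT phi \<longleftrightarrow> (\<exists>B. \<forall>x\<in>X. phi x \<in> T \<and> nT (phi x) \<le> B * nX x)"

definition frame_cond :: "'x::real_vector set \<Rightarrow> ('x \<Rightarrow> real) \<Rightarrow> (nat \<Rightarrow> real) set \<Rightarrow> ((nat \<Rightarrow> real) \<Rightarrow> real) \<Rightarrow> ('x \<Rightarrow> nat \<Rightarrow> real) \<Rightarrow> bool" where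
  "frame_cond X nX T nT phi \<longleftrightarrow> bessel_cond X nX T nT phi \<and> (\<exists>A>0. \<forall>x\<in>X. A * nX x \<le> nT (phi x))"

definition banach_frame_cond :: "'x::real_vector set \<Rightarrow> ('x \<Rightarrow> real) \<Rightarrow> (nat \<Rightarrow> real) set \<Rightarrow> ((nat \<Rightarrow> real) \<Rightarrow> real) \<Rightarrow> ('x \<Rightarrow> nat \<Rightarrow> real) \<Rightarrow> bool" where
  "banach_frame_cond X nX T nT phi \<longleftrightarrow> frame_cond X nX T nT phi
     \<and> (\<exists>V. lin_on T V \<and> (\<forall>c\<in>T. V c \<in> X) \<and> (\<exists>K. \<forall>c\<in>T. nX (V c) \<le> K * nT c)
            \<and> (\<forall>x\<in>X. V (phi x) = x))"

definition Fdual :: "(nat \<Rightarrow> 'a::real_vector set) \<Rightarrow> (nat \<Rightarrow> 'a \<Rightarrow> real) \<Rightarrow> ('a \<Rightarrow> real) set" where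
  "Fdual X ns = {g. lin_on (\<Inter>s. X s) g \<and> (\<exists>s C. \<forall>f\<in>(\<Inter>t. X t). \<bar>g f\<bar> \<le> C * ns s f)}"

definition F_bessel :: "(nat \<Rightarrow> 'a::real_vector set) \<Rightarrow> (nat \<Rightarrow> 'a \<Rightarrow> real) \<Rightarrow> (nat \<Rightarrow> (nat \<Rightarrow> real) set) \<Rightarrow> (nat \<Rightarrow> (nat \<Rightarrow> real) \<Rightarrow> real) \<Rightarrow> (nat \<Rightarrow> 'a \<Rightarrow> real) \<Rightarrow> bool" where
  "F_bessel X ns T tn g \<longleftrightarrow> (\<forall>i. g i \<in> Fdual X ns)
     \<and> (\<forall>f\<in>(\<Inter>s. X s). (\<lambda>i. g i f) \<in> (\<Inter>s. T s))
     \<and> (\<forall>s. \<exists>B. \<forall>f\<in>(\<Inter>t. X t). tn s (\<lambda>i. g i f) \<le> B * ns s f)"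

definition pre_F_frame :: "(nat \<Rightarrow> 'a::real_vector set) \<Rightarrow> (nat \<Rightarrow> 'a \<Rightarrow> real) \<Rightarrow> (nat \<Rightarrow> (nat \<Rightarrow> real) set) \<Rightarrow> (nat \<Rightarrow> (nat \<Rightarrow> real) \<Rightarrow> real) \<Rightarrow> (nat \<Rightarrow> 'a \<Rightarrow> real) \<Rightarrow> bool" where
  "pre_F_frame X ns T tn g \<longleftrightarrow> F_bessel X ns T tn g
     \<and> (\<forall>s. \<exists>A>0. \<forall>f\<in>(\<Inter>t. X t). A * ns s f \<le> tn s (\<lambda>i. g i f))"

definition F_frame :: "(nat \<Rightarrow> 'a::real_vector set) \<Rightarrow> (nat \<Rightarrow> 'a \<Rightarrow> real) \<Rightarrow> (nat \<Rightarrow> (nat \<Rightarrow> real) set) \<Rightarrow> (nat \<Rightarrow> (nat \<Rightarrow> real) \<Rightarrow> real) \<Rightarrow> (nat \<Rightarrow> 'a \<Rightarrow> real) \<Rightarrow> bool" where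
  "F_frame X ns T tn g \<longleftrightarrow> pre_F_frame X ns T tn g
     \<and> (\<exists>V. lin_on (\<Inter>s. T s) V \<and> (\<forall>c\<in>(\<Inter>s. T s). V c \<in> (\<Inter>s. X s))
            \<and> (\<forall>s. \<exists>K. \<forall>c\<in>(\<Inter>t. T t). ns s (V c) \<le> K * tn s c)
            \<and> (\<forall>f\<in>(\<Inter>s. X s). V (\<lambda>i. g i f) = f))"

definition DF_bessel :: "(nat \<Rightarrow> 'a::real_vector set) \<Rightarrow> (nat \<Rightarrow> 'a \<Rightarrow> real) \<Rightarrow> (nat \<Rightarrow> (nat \<Rightarrow> real) set) \<Rightarrow> (nat \<Rightarrow> (nat \<Rightarrow> real) \<Rightarrow> real) \<Rightarrow> (nat \<Rightarrow> 'a) \<Rightarrow> bool" where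
  "DF_bessel X ns T tn f \<longleftrightarrow> (\<forall>i. f i \<in> (\<Inter>s. X s))
     \<and> (\<forall>s. bessel_cond (dual_on (X s) (ns s)) (opnorm (X s) (ns s))
                        (seqdual (T s) (tn s)) (seqdual_norm (T s) (tn s)) (\<lambda>h i. h (f i)))"

definition pre_DF_frame :: "(nat \<Rightarrow> 'a::real_vector set) \<Rightarrow> (nat \<Rightarrow> 'a \<Rightarrow> real) \<Rightarrow> (nat \<Rightarrow> (nat \<Rightarrow> real) set) \<Rightarrow> (nat \<Rightarrow> (nat \<Rightarrow> real) \<Rightarrow> real) \<Rightarrow> (nat \<Rightarrow> 'a) \<Rightarrow> bool" where
  "pre_DF_frame X ns T tn f \<longleftrightarrow> (\<forall>i. f i \<in> (\<Inter>s. X s))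
     \<and> (\<forall>s. frame_cond (dual_on (X s) (ns s)) (opnorm (X s) (ns s))
                        (seqdual (T s) (tn s)) (seqdual_norm (T s) (tn s)) (\<lambda>h i. h (f i)))"

definition DF_frame :: "(nat \<Rightarrow> 'a::real_vector set) \<Rightarrow> (nat \<Rightarrow> 'a \<Rightarrow> real) \<Rightarrow> (nat \<Rightarrow> (nat \<Rightarrow> real) set) \<Rightarrow> (nat \<Rightarrow> (nat \<Rightarrow> real) \<Rightarrow> real) \<Rightarrow> (nat \<Rightarrow> 'a) \<Rightarrow> bool" where
  "DF_frame X ns T tn f \<longleftrightarrow> (\<forall>i. f i \<in> (\<Inter>s. X s))
     \<and> (\<forall>s. banach_frame_cond (dual_on (X s) (ns s)) (opnorm (X s) (ns s))
                        (seqdual (T s) (tn s)) (seqdual_norm (T s) (tn s)) (\<lambda>h i. h (f i)))"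

text \<open>f = sum_i g_i(f) f_i for all f in X_F, convergence in X_F (i.e. in every norm).\<close>
definition F_reconstructs :: "(nat \<Rightarrow> 'a::real_vector set) \<Rightarrow> (nat \<Rightarrow> 'a \<Rightarrow> real) \<Rightarrow> (nat \<Rightarrow> 'a \<Rightarrow> real) \<Rightarrow> (nat \<Rightarrow> 'a) \<Rightarrow> bool" where
  "F_reconstructs X ns g f \<longleftrightarrow>
     (\<forall>x\<in>(\<Inter>s. X s). \<forall>s. (\<lambda>n. ns s (x - (\<Sum>i<n. g i x *\<^sub>R f i))) \<longlonglongrightarrow> 0)"

end

theory Submission
  imports Defs
begin


definition subsp :: "'a::real_vector set \<Rightarrow> bool" where
  "subsp S \<longleftrightarrow> 0 \<in> S \<and> (\<forall>x\<in>S. \<forall>y\<in>S. x + y \<in> S) \<and> (\<forall>c. \<forall>x\<in>S. c *\<^sub>R x \<in> S)"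

definition sublin_on :: "'a::real_vector set \<Rightarrow> ('a \<Rightarrow> real) \<Rightarrow> bool" where
  "sublin_on S r \<longleftrightarrow> (\<forall>a\<in>S. \<forall>b\<in>S. r (a + b) \<le> r a + r b) \<and> (\<forall>c\<ge>0. \<forall>a\<in>S. r (c *\<^sub>R a) = c * r a)"

lemma subsp_0: "subsp S \<Longrightarrow> 0 \<in> S" by (simp add: subsp_def)
lemma subsp_add: "subsp S \<Longrightarrow> x \<in> S \<Longrightarrow> y \<in> S \<Longrightarrow> x + y \<in> S" by (simp add: subsp_def)
lemma subsp_scale: "subsp S \<Longrightarrow> x \<in> S \<Longrightarrow> c *\<^sub>R x \<in> S" by (simp add: subsp_def)
lemma subsp_neg: "subsp S \<Longrightarrow> x \<in> S \<Longrightarrow> - x \<in> S"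
  using subsp_scale[of S x "-1"] by simp
lemma subsp_diff: "subsp S \<Longrightarrow> x \<in> S \<Longrightarrow> y \<in> S \<Longrightarrow> x - y \<in> S"
  using subsp_add[of S x "-y"] subsp_neg[of S y] by simp

lemma sublin_add: "sublin_on S r \<Longrightarrow> a \<in> S \<Longrightarrow> b \<in> S \<Longrightarrow> r (a + b) \<le> r a + r b"
  by (simp add: sublin_on_def)
lemma sublin_scale: "sublin_on S r \<Longrightarrow> c \<ge> 0 \<Longrightarrow> a \<in> S \<Longrightarrow> r (c *\<^sub>R a) = c * r a"
  by (simp add: sublin_on_def)
lemma sublin_0: "sublin_on S r \<Longrightarrow> 0 \<in> S \<Longrightarrow> r 0 = 0"
  using sublin_scale[of S r 0 0] by simp
lemma sublin_lower: "subsp S \<Longrightarrow> sublin_on S r \<Longrightarrow> z \<in> S \<Longrightarrow> - r (- z) \<le> r z"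
proof -
  assume s: "subsp S" "sublin_on S r" "z \<in> S"
  have "r (z + - z) \<le> r z + r (-z)" using s by (intro sublin_add) (auto intro: subsp_neg)
  then show ?thesis using sublin_0[OF s(2) subsp_0[OF s(1)]] by simp
qed

definition shiftf :: "'a::real_vector set \<Rightarrow> ('a \<Rightarrow> real) \<Rightarrow> 'a \<Rightarrow> 'a \<Rightarrow> real" where
  "shiftf S r x = (\<lambda>z. if z \<in> S then Inf {r (z + t *\<^sub>R x) - t * r x | t. t \<ge> 0} else 0)"

lemma shift_elem_ge:
  assumes S: "subsp S" and r: "sublin_on S r" and x: "x \<in> S" and z: "z \<in> S" and t: "t \<ge> 0"
  shows "- r (- z) \<le> r (z + t *\<^sub>R x) - t * r x"
proof -
  have "t *\<^sub>R x = (z + t *\<^sub>R x) + (- z)" by simp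
  then have "r (t *\<^sub>R x) \<le> r (z + t *\<^sub>R x) + r (- z)"
    by (metis S r sublin_add subsp_add subsp_neg subsp_scale x z)
  then show ?thesis using sublin_scale[OF r t x] by simp
qed

lemma shift_le:
  assumes S: "subsp S" and r: "sublin_on S r" and x: "x \<in> S" and z: "z \<in> S" and t: "t \<ge> 0"
  shows "shiftf S r x z \<le> r (z + t *\<^sub>R x) - t * r x"
proof -
  have "bdd_below {r (z + t *\<^sub>R x) - t * r x | t. t \<ge> 0}"
    unfolding bdd_below_def using shift_elem_ge[OF S r x z] by blast
  then show ?thesis unfolding shiftf_def using z t by (auto intro!: cInf_lower)
qed

lemma shift_ge:
  assumes z: "z \<in> S" and h: "\<And>t. t \<ge> 0 \<Longrightarrow> v \<le> r (z + t *\<^sub>R x) - t * r x"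
  shows "v \<le> shiftf S r x z"
  unfolding shiftf_def using z h by (auto intro!: cInf_greatest)

lemma shift_below:
  assumes S: "subsp S" and r: "sublin_on S r" and x: "x \<in> S" and z: "z \<in> S"
  shows "shiftf S r x z \<le> r z"
  using shift_le[OF S r x z, of 0] by simp

lemma shift_neg:
  assumes S: "subsp S" and r: "sublin_on S r" and x: "x \<in> S"
  shows "shiftf S r x (- x) \<le> - r x"
  using shift_le[OF S r x subsp_neg[OF S x], of 1] sublin_0[OF r subsp_0[OF S]] by simp

lemma shift_sublin:
  assumes S: "subsp S" and r: "sublin_on S r" and x: "x \<in> S"
  shows "sublin_on S (shiftf S r x)"
  unfolding sublin_on_def
proof (intro conjI ballI allI impI)
  fix a b assume a: "a \<in> S" and b: "b \<in> S"
  have ab: "a + b \<in> S" using S a b by (rule subsp_add)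
  let ?f = "shiftf S r x"
  have key: "?f (a + b) \<le> (r (a + t1 *\<^sub>R x) - t1 * r x) + (r (b + t2 *\<^sub>R x) - t2 * r x)"
    if t1: "t1 \<ge> 0" and t2: "t2 \<ge> 0" for t1 t2
  proof -
    have "?f (a + b) \<le> r (a + b + (t1 + t2) *\<^sub>R x) - (t1 + t2) * r x"
      using shift_le[OF S r x ab] t1 t2 by simp
    also have "a + b + (t1 + t2) *\<^sub>R x = (a + t1 *\<^sub>R x) + (b + t2 *\<^sub>R x)"
      by (simp add: algebra_simps)
    also have "r \<dots> \<le> r (a + t1 *\<^sub>R x) + r (b + t2 *\<^sub>R x)"
      using S a b x by (intro sublin_add[OF r]) (auto intro: subsp_add subsp_scale)
    finally show ?thesis by (simp add: algebra_simps)
  qed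
  have "?f (a + b) - ?f b \<le> ?f a"
  proof (rule shift_ge[OF a])
    fix t1 :: real assume t1: "t1 \<ge> 0"
    have "?f (a + b) - (r (a + t1 *\<^sub>R x) - t1 * r x) \<le> ?f b"
      by (rule shift_ge[OF b]) (use key t1 in fastforce)
    then show "?f (a + b) - ?f b \<le> r (a + t1 *\<^sub>R x) - t1 * r x" by simp
  qed
  then show "?f (a + b) \<le> ?f a + ?f b" by simp
next
  fix c :: real and a assume c: "c \<ge> 0" and a: "a \<in> S"
  let ?f = "shiftf S r x"
  have ca: "c *\<^sub>R a \<in> S" using S a by (rule subsp_scale)
  show "?f (c *\<^sub>R a) = c * ?f a"
  proof (cases "c = 0")
    case True
    have "?f 0 = 0"
    proof (rule antisym)
      show "?f 0 \<le> 0" using shift_le[OF S r x subsp_0[OF S], of 0] sublin_0[OF r subsp_0[OF S]] by simp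
      show "0 \<le> ?f 0"
        by (rule shift_ge[OF subsp_0[OF S]]) (use sublin_scale[OF r _ x] in simp)
    qed
    then show ?thesis using True by simp
  next
    case False
    then have cp: "c > 0" using c by simp
    have 1: "?f (c *\<^sub>R a) \<le> c * ?f a"
    proof -
      have "?f (c *\<^sub>R a) / c \<le> ?f a"
      proof (rule shift_ge[OF a])
        fix t :: real assume t: "t \<ge> 0"
        have "?f (c *\<^sub>R a) \<le> r (c *\<^sub>R a + (c * t) *\<^sub>R x) - (c * t) * r x"
          using shift_le[OF S r x ca] cp t by simp
        also have "c *\<^sub>R a + (c * t) *\<^sub>R x = c *\<^sub>R (a + t *\<^sub>R x)" by (simp add: algebra_simps)
        also have "r \<dots> = c * r (a + t *\<^sub>R x)"
          using S a x c by (intro sublin_scale[OF r]) (auto intro: subsp_add subsp_scale)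
        finally have "?f (c *\<^sub>R a) \<le> c * (r (a + t *\<^sub>R x) - t * r x)" by (simp add: algebra_simps)
        then show "?f (c *\<^sub>R a) / c \<le> r (a + t *\<^sub>R x) - t * r x" using cp by (simp add: field_simps)
      qed
      then show ?thesis using cp by (simp add: field_simps)
    qed
    have 2: "c * ?f a \<le> ?f (c *\<^sub>R a)"
    proof (rule shift_ge[OF ca])
      fix t :: real assume t: "t \<ge> 0"
      have "?f a \<le> r (a + (t / c) *\<^sub>R x) - (t / c) * r x"
        using shift_le[OF S r x a, of "t / c"] cp t by simp
      then have "c * ?f a \<le> c * (r (a + (t / c) *\<^sub>R x) - (t / c) * r x)"
        using cp by simp
      also have "\<dots> = c * r (a + (t / c) *\<^sub>R x) - t * r x" using cp by (simp add: algebra_simps)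
      also have "c * r (a + (t / c) *\<^sub>R x) = r (c *\<^sub>R (a + (t / c) *\<^sub>R x))"
        using S a x c by (intro sublin_scale[OF r, symmetric]) (auto intro: subsp_add subsp_scale)
      also have "c *\<^sub>R (a + (t / c) *\<^sub>R x) = c *\<^sub>R a + t *\<^sub>R x" using cp by (simp add: algebra_simps)
      finally show "c * ?f a \<le> r (c *\<^sub>R a + t *\<^sub>R x) - t * r x" .
    qed
    from 1 2 show ?thesis by simp
  qed
qed




lemma chain_inf_sublin:
  assumes S: "subsp S" and q: "sublin_on S q"
    and C: "C \<noteq> {}" and CA: "\<And>r. r \<in> C \<Longrightarrow> sublin_on S r \<and> (\<forall>z\<in>S. r z \<le> q z)"
    and ch: "\<And>a b. a \<in> C \<Longrightarrow> b \<in> C \<Longrightarrow> (\<forall>z\<in>S. b z \<le> a z) \<or> (\<forall>z\<in>S. a z \<le> b z)"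
  shows "sublin_on S (\<lambda>z. if z \<in> S then Inf ((\<lambda>r. r z) ` C) else 0)"
    and "\<And>z r. z \<in> S \<Longrightarrow> r \<in> C \<Longrightarrow> (\<lambda>z. if z \<in> S then Inf ((\<lambda>r. r z) ` C) else 0) z \<le> r z"
proof -
  define u where "u = (\<lambda>z. if z \<in> S then Inf ((\<lambda>r. r z) ` C) else 0)"

  have bdd: "bdd_below ((\<lambda>r. r z) ` C)" if z: "z \<in> S" for z
  proof -
    have "- q (- z) \<le> r z" if "r \<in> C" for r
    proof -
      have "- r (- z) \<le> r z" using sublin_lower[OF S _ z] CA[OF that] by blast
      moreover have "r (- z) \<le> q (- z)" using CA[OF that] subsp_neg[OF S z] by blast
      ultimately show ?thesis by simp
    qed
    then show ?thesis unfolding bdd_below_def by blast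
  qed
  have low: "u z \<le> r z" if "z \<in> S" "r \<in> C" for z r
    unfolding u_def using that bdd by (auto intro!: cInf_lower)
  have great: "v \<le> u z" if "z \<in> S" "\<And>r. r \<in> C \<Longrightarrow> v \<le> r z" for z v
    unfolding u_def using that C by (auto intro!: cInf_greatest)
  show "\<And>z r. z \<in> S \<Longrightarrow> r \<in> C \<Longrightarrow> (\<lambda>z. if z \<in> S then Inf ((\<lambda>r. r z) ` C) else 0) z \<le> r z"
    using low unfolding u_def by blast
  show "sublin_on S (\<lambda>z. if z \<in> S then Inf ((\<lambda>r. r z) ` C) else 0)" unfolding u_def[symmetric] sublin_on_def
  proof (intro conjI ballI allI impI)
    fix a b assume a: "a \<in> S" and b: "b \<in> S"
    have ab: "a + b \<in> S" using S a b by (rule subsp_add)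
    have key: "u (a + b) \<le> r1 a + r2 b" if r1: "r1 \<in> C" and r2: "r2 \<in> C" for r1 r2
    proof (cases "\<forall>z\<in>S. r2 z \<le> r1 z")
      case True
      have "u (a + b) \<le> r2 (a + b)" using low[OF ab r2] .
      also have "\<dots> \<le> r2 a + r2 b" using CA[OF r2] a b sublin_add by blast
      also have "\<dots> \<le> r1 a + r2 b" using True a by auto
      finally show ?thesis .
    next
      case False
      then have T: "\<forall>z\<in>S. r1 z \<le> r2 z" using ch[OF r1 r2] by blast
      have "u (a + b) \<le> r1 (a + b)" using low[OF ab r1] .
      also have "\<dots> \<le> r1 a + r1 b" using CA[OF r1] a b sublin_add by blast
      also have "\<dots> \<le> r1 a + r2 b" using T b by auto
      finally show ?thesis .
    qed
    have "u (a + b) - u b \<le> u a"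
    proof (rule great[OF a])
      fix r1 assume r1: "r1 \<in> C"
      have "u (a + b) - r1 a \<le> u b" by (rule great[OF b]) (use key r1 in fastforce)
      then show "u (a + b) - u b \<le> r1 a" by simp
    qed
    then show "u (a + b) \<le> u a + u b" by simp
  next
    fix c :: real and a assume c: "c \<ge> 0" and a: "a \<in> S"
    have ca: "c *\<^sub>R a \<in> S" using S a by (rule subsp_scale)
    show "u (c *\<^sub>R a) = c * u a"
    proof (cases "c = 0")
      case True
      have "u 0 = 0"
      proof (rule antisym)
        obtain r where r: "r \<in> C" using C by blast
        show "u 0 \<le> 0" using low[OF subsp_0[OF S] r] sublin_0[of S r] CA[OF r] subsp_0[OF S] by simp
        show "0 \<le> u 0" by (rule great[OF subsp_0[OF S]]) (use CA sublin_0 subsp_0[OF S] in force)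
      qed
      then show ?thesis using True by simp
    next
      case False
      then have cp: "c > 0" using c by simp
      have 1: "u (c *\<^sub>R a) / c \<le> u a"
      proof (rule great[OF a])
        fix r assume r: "r \<in> C"
        have "u (c *\<^sub>R a) \<le> r (c *\<^sub>R a)" using low[OF ca r] .
        also have "\<dots> = c * r a" using CA[OF r] c a sublin_scale by blast
        finally show "u (c *\<^sub>R a) / c \<le> r a" using cp by (simp add: field_simps)
      qed
      have 2: "c * u a \<le> u (c *\<^sub>R a)"
      proof (rule great[OF ca])
        fix r assume r: "r \<in> C"
        have "c * u a \<le> c * r a" using low[OF a r] cp by simp
        also have "\<dots> = r (c *\<^sub>R a)" using CA[OF r] c a sublin_scale by metis
        finally show "c * u a \<le> r (c *\<^sub>R a)" .
      qed
      from 1 2 cp show ?thesis by (simp add: field_simps)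
    qed
  qed
qed

lemma HB_sublinear:
  assumes S: "subsp S" and q: "sublin_on S q"
  shows "\<exists>L. lin_on S L \<and> (\<forall>z\<in>S. L z \<le> q z)"
proof -
  define A where "A = {r. sublin_on S r \<and> (\<forall>z\<in>S. r z \<le> q z) \<and> (\<forall>z. z \<notin> S \<longrightarrow> r z = 0)}"
  define P where "P = (\<lambda>a b::'a \<Rightarrow> real. \<forall>z\<in>S. b z \<le> a z)"
  define q' where "q' = (\<lambda>z. if z \<in> S then q z else 0)"
  have sl_cong: "sublin_on S r'" if "sublin_on S r" "\<And>z. z \<in> S \<Longrightarrow> r' z = r z" for r r'
    using that S unfolding sublin_on_def by (simp add: subsp_add subsp_scale)
  have q'A: "q' \<in> A" unfolding A_def q'_def by (auto intro: sl_cong[OF q])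
  have po: "partial_order_on A (relation_of P A)"
  proof (rule partial_order_on_relation_ofI)
    show "P a a" for a unfolding P_def by simp
    show "P a c" if "P a b" "P b c" for a b c using that unfolding P_def by force
    show "a = b" if "a \<in> A" "b \<in> A" "P a b" "P b a" for a b
    proof
      fix z show "a z = b z" using that unfolding A_def P_def by (cases "z \<in> S") force+
    qed
  qed
  have "\<exists>m\<in>A. \<forall>a\<in>A. P m a \<longrightarrow> a = m"
  proof (rule predicate_Zorn[OF po])
    fix C assume C: "C \<in> Chains (relation_of P A)"
    have CA: "C \<subseteq> A" using C unfolding Chains_def relation_of_def by blast
    have ch: "P a b \<or> P b a" if "a \<in> C" "b \<in> C" for a b
      using C that unfolding Chains_def relation_of_def by blast
    show "\<exists>u\<in>A. \<forall>a\<in>C. P a u"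
    proof (cases "C = {}")
      case True then show ?thesis using q'A by blast
    next
      case False
      define u where "u = (\<lambda>z. if z \<in> S then Inf ((\<lambda>r. r z) ` C) else 0)"
      have CA': "\<And>r. r \<in> C \<Longrightarrow> sublin_on S r \<and> (\<forall>z\<in>S. r z \<le> q z)" using CA unfolding A_def by blast
      have ch': "\<And>a b. a \<in> C \<Longrightarrow> b \<in> C \<Longrightarrow> (\<forall>z\<in>S. b z \<le> a z) \<or> (\<forall>z\<in>S. a z \<le> b z)"
        using ch unfolding P_def by blast
      have U1: "sublin_on S u" using chain_inf_sublin(1)[of S q C, OF S q False CA' ch'] unfolding u_def by blast
      have U2: "\<And>z r. z \<in> S \<Longrightarrow> r \<in> C \<Longrightarrow> u z \<le> r z"
        using chain_inf_sublin(2)[of S q C, OF S q False CA' ch'] unfolding u_def by blast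
      note U = U1 U2
      obtain r0 where r0: "r0 \<in> C" using False by blast
      have "u \<in> A" unfolding A_def
      proof (intro CollectI conjI allI impI ballI)
        show "sublin_on S u" by (rule U(1))
        show "u z \<le> q z" if "z \<in> S" for z using U(2)[OF that r0] CA'[OF r0] that by force
        show "u z = 0" if "z \<notin> S" for z using that unfolding u_def by simp
      qed
      moreover have "\<forall>a\<in>C. P a u" unfolding P_def using U(2) by blast
      ultimately show ?thesis by blast
    qed
  qed
  then obtain m where mA: "m \<in> A" and mmin: "\<And>a. a \<in> A \<Longrightarrow> P m a \<Longrightarrow> a = m" by blast
  have msl: "sublin_on S m" using mA unfolding A_def by blast
  have neg: "m (- x) = - m x" if x: "x \<in> S" for x
  proof -
    have "shiftf S m x \<in> A" unfolding A_def
    proof (intro CollectI conjI allI impI ballI)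
      show "sublin_on S (shiftf S m x)" by (rule shift_sublin[OF S msl x])
      show "shiftf S m x z \<le> q z" if "z \<in> S" for z
        using shift_below[OF S msl x that] mA that unfolding A_def by force
      show "shiftf S m x z = 0" if "z \<notin> S" for z using that unfolding shiftf_def by simp
    qed
    moreover have "P m (shiftf S m x)" unfolding P_def using shift_below[OF S msl x] by blast
    ultimately have e: "shiftf S m x = m" using mmin by blast
    have "m (- x) \<le> - m x" using shift_neg[OF S msl x] e by simp
    moreover have "- m (- x) \<le> m x" using sublin_lower[OF S msl x] .
    ultimately show ?thesis by simp
  qed
  have "lin_on S m" unfolding lin_on_def
  proof (intro conjI ballI allI)
    fix a b assume a: "a \<in> S" and b: "b \<in> S"
    have 1: "m (a + b) \<le> m a + m b" using sublin_add[OF msl a b] .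
    have "m (- a + - b) \<le> m (- a) + m (- b)"
      using sublin_add[OF msl subsp_neg[OF S a] subsp_neg[OF S b]] .
    then have "m (- (a + b)) \<le> - m a - m b" using neg a b by simp
    then have 2: "- m (a + b) \<le> - m a - m b" using neg[OF subsp_add[OF S a b]] by simp
    from 1 2 show "m (a + b) = m a + m b" by simp
  next
    fix c :: real and a assume a: "a \<in> S"
    show "m (c *\<^sub>R a) = c *\<^sub>R m a"
    proof (cases "c \<ge> 0")
      case True then show ?thesis using sublin_scale[OF msl True a] by simp
    next
      case False
      have "m (c *\<^sub>R a) = m ((- c) *\<^sub>R (- a))" by simp
      also have "\<dots> = (- c) * m (- a)" using False by (intro sublin_scale[OF msl]) (auto intro: subsp_neg[OF S a])
      also have "\<dots> = c * m a" using neg[OF a] by simp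
      finally show ?thesis by simp
    qed
  qed
  moreover have "\<forall>z\<in>S. m z \<le> q z" using mA unfolding A_def by blast
  ultimately show ?thesis by blast
qed




section \<open>Normed sets\<close>

lemma normed_subsp: "normed_on S n \<Longrightarrow> subsp S"
  by (simp add: normed_on_def subsp_def)
lemma n_nonneg: "normed_on S n \<Longrightarrow> x \<in> S \<Longrightarrow> n x \<ge> 0"
  by (simp add: normed_on_def)
lemma n_eq0: "normed_on S n \<Longrightarrow> x \<in> S \<Longrightarrow> n x = 0 \<longleftrightarrow> x = 0"
  by (simp add: normed_on_def)
lemma n_zero: "normed_on S n \<Longrightarrow> n 0 = 0"
  by (simp add: normed_on_def)
lemma n_scale: "normed_on S n \<Longrightarrow> x \<in> S \<Longrightarrow> n (c *\<^sub>R x) = \<bar>c\<bar> * n x"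
  by (simp add: normed_on_def)
lemma n_add: "normed_on S n \<Longrightarrow> x \<in> S \<Longrightarrow> y \<in> S \<Longrightarrow> n (x + y) \<le> n x + n y"
  by (simp add: normed_on_def)
lemma n_neg: "normed_on S n \<Longrightarrow> x \<in> S \<Longrightarrow> n (- x) = n x"
  using n_scale[of S n x "-1"] by simp
lemma n_commute: "normed_on S n \<Longrightarrow> x \<in> S \<Longrightarrow> y \<in> S \<Longrightarrow> n (x - y) = n (y - x)"
  using n_neg[of S n "y - x"] subsp_diff[OF normed_subsp] by (metis minus_diff_eq)
lemma n_tri: "normed_on S n \<Longrightarrow> x \<in> S \<Longrightarrow> y \<in> S \<Longrightarrow> z \<in> S \<Longrightarrow> n (x - z) \<le> n (x - y) + n (y - z)"
  using n_add[of S n "x - y" "y - z"] subsp_diff[OF normed_subsp] by (metis diff_add_cancel add_diff_eq)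
lemma n_diff_le: "normed_on S n \<Longrightarrow> x \<in> S \<Longrightarrow> y \<in> S \<Longrightarrow> n x - n y \<le> n (x - y)"
  using n_add[of S n "x - y" y] subsp_diff[OF normed_subsp] by fastforce
lemma n_abs_diff: "normed_on S n \<Longrightarrow> x \<in> S \<Longrightarrow> y \<in> S \<Longrightarrow> \<bar>n x - n y\<bar> \<le> n (x - y)"
  using n_diff_le[of S n x y] n_diff_le[of S n y x] n_commute[of S n x y] by linarith

lemma subsp_sum: assumes "subsp S" "finite I" "\<And>i. i \<in> I \<Longrightarrow> v i \<in> S" shows "(\<Sum>i\<in>I. c i *\<^sub>R v i) \<in> S"
  using assms(2,3) by (induction I rule: finite_induct) (auto intro: subsp_add[OF assms(1)] subsp_scale[OF assms(1)] subsp_0[OF assms(1)])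

lemma n_tendsto:
  assumes N: "normed_on S n" and x: "x \<in> S" and a: "\<And>k. a k \<in> S"
    and l: "(\<lambda>k. n (a k - x)) \<longlonglongrightarrow> 0"
  shows "(\<lambda>k. n (a k)) \<longlonglongrightarrow> n x"
proof -
  have "(\<lambda>k. n (a k) - n x) \<longlonglongrightarrow> 0"
    by (rule Lim_null_comparison[OF _ l]) (use n_abs_diff[OF N a x] in auto)
  then show ?thesis by (simp add: LIM_zero_iff)
qed

section \<open>Linear maps\<close>

lemma lin_add: "lin_on S L \<Longrightarrow> x \<in> S \<Longrightarrow> y \<in> S \<Longrightarrow> L (x + y) = L x + L y"
  by (simp add: lin_on_def)
lemma lin_scale: "lin_on S L \<Longrightarrow> x \<in> S \<Longrightarrow> L (c *\<^sub>R x) = c *\<^sub>R L x"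
  by (simp add: lin_on_def)
lemma lin_0: "lin_on S L \<Longrightarrow> 0 \<in> S \<Longrightarrow> L 0 = 0"
  using lin_scale[of S L 0 0] by simp
lemma lin_neg: "lin_on S L \<Longrightarrow> x \<in> S \<Longrightarrow> L (- x) = - L x"
  using lin_scale[of S L x "-1"] by simp
lemma lin_diff: "lin_on S L \<Longrightarrow> subsp S \<Longrightarrow> x \<in> S \<Longrightarrow> y \<in> S \<Longrightarrow> L (x - y) = L x - L y"
  using lin_add[of S L x "- y"] lin_neg[of S L y] subsp_neg[of S y] by simp
lemma lin_sum: assumes L: "lin_on S L" and S: "subsp S" and fin: "finite I" and v: "\<And>i. i \<in> I \<Longrightarrow> v i \<in> S"
   shows "L (\<Sum>i\<in>I. c i *\<^sub>R v i) = (\<Sum>i\<in>I. c i *\<^sub>R L (v i))"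
  using fin v
proof (induction I rule: finite_induct)
  case empty then show ?case using lin_0[OF L subsp_0[OF S]] by simp
next
  case (insert j I)
  have "(\<Sum>i\<in>insert j I. c i *\<^sub>R v i) = c j *\<^sub>R v j + (\<Sum>i\<in>I. c i *\<^sub>R v i)" using insert by simp
  moreover have "(\<Sum>i\<in>I. c i *\<^sub>R v i) \<in> S" using insert subsp_sum[OF S] by blast
  moreover have "c j *\<^sub>R v j \<in> S" using insert subsp_scale[OF S] by blast
  ultimately show ?case using insert lin_add[OF L] lin_scale[OF L] by simp
qed

section \<open>Duals\<close>

lemma dualD: "g \<in> dual_on S n \<Longrightarrow> lin_on S g \<and> (\<exists>C. \<forall>x\<in>S. \<bar>g x\<bar> \<le> C * n x) \<and> (\<forall>x. x \<notin> S \<longrightarrow> g x = 0)"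
  by (auto simp: dual_on_def)

lemma dualD':
  assumes g: "g \<in> dual_on S n" and N: "normed_on S n"
  shows "\<exists>C\<ge>0. \<forall>x\<in>S. \<bar>g x\<bar> \<le> C * n x"
proof -
  obtain C where C: "\<forall>x\<in>S. \<bar>g x\<bar> \<le> C * n x" using g by (auto simp: dual_on_def)
  have "\<forall>x\<in>S. \<bar>g x\<bar> \<le> max C 0 * n x"
  proof
    fix x assume x: "x \<in> S"
    have "C * n x \<le> max C 0 * n x" using n_nonneg[OF N x] by (simp add: mult_right_mono)
    then show "\<bar>g x\<bar> \<le> max C 0 * n x" using C x by auto
  qed
  then show ?thesis by (intro exI[of _ "max C 0"]) auto
qed

lemma dualI: "lin_on S g \<Longrightarrow> (\<And>x. x \<in> S \<Longrightarrow> \<bar>g x\<bar> \<le> C * n x) \<Longrightarrow> (\<And>x. x \<notin> S \<Longrightarrow> g x = 0) \<Longrightarrow> g \<in> dual_on S n"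
  by (auto simp: dual_on_def)

lemma dual_cont:
  assumes g: "g \<in> dual_on S n" and N: "normed_on S n" and x: "x \<in> S" and a: "\<And>k. a k \<in> S"
    and l: "(\<lambda>k. n (a k - x)) \<longlonglongrightarrow> 0"
  shows "(\<lambda>k. g (a k)) \<longlonglongrightarrow> g x"
proof -
  obtain C where C: "C \<ge> 0" "\<forall>x\<in>S. \<bar>g x\<bar> \<le> C * n x" using dualD'[OF g N] by blast
  have lin: "lin_on S g" using dualD[OF g] by blast
  have "(\<lambda>k. C * n (a k - x)) \<longlonglongrightarrow> C * 0" by (intro tendsto_mult tendsto_const l)
  then have l2: "(\<lambda>k. C * n (a k - x)) \<longlonglongrightarrow> 0" by simp
  have "(\<lambda>k. g (a k) - g x) \<longlonglongrightarrow> 0"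
  proof (rule Lim_null_comparison[OF _ l2])
    show "\<forall>\<^sub>F k in sequentially. norm (g (a k) - g x) \<le> C * n (a k - x)"
      using C(2) lin_diff[OF lin normed_subsp[OF N] a x] subsp_diff[OF normed_subsp[OF N] a x]
      by (intro always_eventually allI) (metis real_norm_def)
  qed
  then show ?thesis by (simp add: LIM_zero_iff)
qed

lemma opnorm_facts:
  assumes g: "g \<in> dual_on S n" and N: "normed_on S n"
  shows "bdd_above {\<bar>g x\<bar> | x. x \<in> S \<and> n x \<le> 1}" and "opnorm S n g \<ge> 0"
proof -
  obtain C where C: "C \<ge> 0" "\<forall>x\<in>S. \<bar>g x\<bar> \<le> C * n x" using dualD'[OF g N] by blast
  have "\<bar>g x\<bar> \<le> C" if "x \<in> S" "n x \<le> 1" for x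
    using C that by (meson mult_left_le order_trans n_nonneg[OF N])
  then show b: "bdd_above {\<bar>g x\<bar> | x. x \<in> S \<and> n x \<le> 1}" unfolding bdd_above_def by blast
  have 0: "0 \<in> S" using normed_subsp[OF N] subsp_0 by blast
  have "\<bar>g 0\<bar> \<in> {\<bar>g x\<bar> | x. x \<in> S \<and> n x \<le> 1}" using 0 n_zero[OF N] by auto
  then have "\<bar>g 0\<bar> \<le> opnorm S n g" unfolding opnorm_def using b by (rule cSup_upper)
  then show "opnorm S n g \<ge> 0" by simp
qed

lemma opnorm_bound:
  assumes g: "g \<in> dual_on S n" and N: "normed_on S n" and x: "x \<in> S"
  shows "\<bar>g x\<bar> \<le> opnorm S n g * n x"
proof (cases "n x = 0")
  case True
  then have "x = 0" using n_eq0[OF N x] by simp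
  then have "g x = 0" using lin_0[of S g] dualD[OF g] normed_subsp[OF N] subsp_0 by blast
  then show ?thesis using True by simp
next
  case False
  then have np: "n x > 0" using n_nonneg[OF N x] by simp
  let ?y = "(1 / n x) *\<^sub>R x"
  have y: "?y \<in> S" using normed_subsp[OF N] x subsp_scale by blast
  have ny: "n ?y = 1" using n_scale[OF N x] np by simp
  have gy: "g ?y = g x / n x" using lin_scale[of S g x] dualD[OF g] x by simp
  have "\<bar>g ?y\<bar> \<le> opnorm S n g" unfolding opnorm_def
    by (rule cSup_upper) (use y ny opnorm_facts(1)[OF g N] in auto)
  then have "\<bar>g x\<bar> / n x \<le> opnorm S n g" using gy np by simp
  then show ?thesis using np by (simp add: field_simps)
qed

lemma opnorm_le:
  assumes N: "normed_on S n" and K: "K \<ge> 0" and b: "\<And>x. x \<in> S \<Longrightarrow> \<bar>g x\<bar> \<le> K * n x"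
  shows "opnorm S n g \<le> K"
  unfolding opnorm_def
proof (rule cSup_least)
  have "0 \<in> S" using normed_subsp[OF N] subsp_0 by blast
  then show "{\<bar>g x\<bar> | x. x \<in> S \<and> n x \<le> 1} \<noteq> {}" using n_zero[OF N] by auto
  show "v \<le> K" if "v \<in> {\<bar>g x\<bar> | x. x \<in> S \<and> n x \<le> 1}" for v
    using that b K by (auto intro: order_trans mult_left_le)
qed

lemma dual_add:
  assumes "g1 \<in> dual_on S n" "g2 \<in> dual_on S n"
  shows "g1 + g2 \<in> dual_on S n"
proof -
  obtain C1 where C1: "\<forall>x\<in>S. \<bar>g1 x\<bar> \<le> C1 * n x" using dualD[OF assms(1)] by blast
  obtain C2 where C2: "\<forall>x\<in>S. \<bar>g2 x\<bar> \<le> C2 * n x" using dualD[OF assms(2)] by blast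
  show ?thesis
  proof (rule dualI[where C = "C1 + C2"])
    show "lin_on S (g1 + g2)" using dualD[OF assms(1)] dualD[OF assms(2)] by (simp add: lin_on_def algebra_simps)
    show "\<bar>(g1 + g2) x\<bar> \<le> (C1 + C2) * n x" if "x \<in> S" for x
    proof -
      have "\<bar>g1 x\<bar> \<le> C1 * n x" "\<bar>g2 x\<bar> \<le> C2 * n x" using C1 C2 that by auto
      then show ?thesis using abs_triangle_ineq[of "g1 x" "g2 x"] by (simp add: distrib_right)
    qed
    show "(g1 + g2) x = 0" if "x \<notin> S" for x using dualD[OF assms(1)] dualD[OF assms(2)] that by simp
  qed
qed

lemma dual_scale:
  assumes "g \<in> dual_on S n"
  shows "c *\<^sub>R g \<in> dual_on S n"
proof -
  obtain C where C: "\<forall>x\<in>S. \<bar>g x\<bar> \<le> C * n x" using dualD[OF assms] by blast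
  show ?thesis
  proof (rule dualI[where C = "\<bar>c\<bar> * C"])
    show "lin_on S (c *\<^sub>R g)" using dualD[OF assms] by (simp add: lin_on_def scaleR_fun_def algebra_simps)
    show "\<bar>(c *\<^sub>R g) x\<bar> \<le> (\<bar>c\<bar> * C) * n x" if "x \<in> S" for x
      using C that by (simp add: scaleR_fun_def abs_mult mult.assoc mult_left_mono)
    show "(c *\<^sub>R g) x = 0" if "x \<notin> S" for x using dualD[OF assms] that by (simp add: scaleR_fun_def)
  qed
qed




lemma dense_seq:
  assumes N: "normed_on S n" and DS: "D \<subseteq> S" and x: "x \<in> S"
    and dense: "\<forall>\<epsilon>>0. \<exists>d\<in>D. n (x - d) < \<epsilon>"
  shows "\<exists>a. (\<forall>k. a k \<in> D) \<and> (\<lambda>k. n (a k - x)) \<longlonglongrightarrow> 0"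
proof -
  have "\<forall>k. \<exists>d\<in>D. n (x - d) < inverse (real (Suc k))" using dense by simp
  then obtain a where a: "\<And>k. a k \<in> D" "\<And>k. n (x - a k) < inverse (real (Suc k))"
    by metis
  have "(\<lambda>k. n (a k - x)) \<longlonglongrightarrow> 0"
  proof (rule Lim_null_comparison[OF _ LIMSEQ_inverse_real_of_nat])
    show "\<forall>\<^sub>F k in sequentially. norm (n (a k - x)) \<le> inverse (real (Suc k))"
    proof (intro always_eventually allI)
      fix k
      have ak: "a k \<in> S" using a DS by blast
      have "n (a k - x) = n (x - a k)" using n_commute[OF N ak x] .
      then show "norm (n (a k - x)) \<le> inverse (real (Suc k))"
        using a(2)[of k] n_nonneg[OF N subsp_diff[OF normed_subsp[OF N] ak x]] by simp
    qed
  qed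
  then show ?thesis using a by blast
qed

lemma lim_diff_tri:
  assumes N: "normed_on S n" and x: "x \<in> S" and a: "\<And>k. a k \<in> S" and b: "\<And>k. b k \<in> S"
    and la: "(\<lambda>k. n (a k - x)) \<longlonglongrightarrow> 0" and lb: "(\<lambda>k. n (b k - x)) \<longlonglongrightarrow> 0"
  shows "(\<lambda>k. n (a k - b k)) \<longlonglongrightarrow> 0"
proof (rule Lim_null_comparison)
  show "(\<lambda>k. n (a k - x) + n (b k - x)) \<longlonglongrightarrow> 0" using tendsto_add[OF la lb] by simp
  show "\<forall>\<^sub>F k in sequentially. norm (n (a k - b k)) \<le> n (a k - x) + n (b k - x)"
  proof (intro always_eventually allI)
    fix k
    have "n (a k - b k) \<le> n (a k - x) + n (x - b k)" using n_tri[OF N a x b] .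
    moreover have "n (x - b k) = n (b k - x)" using n_commute[OF N x b] .
    moreover have "n (a k - b k) \<ge> 0" using n_nonneg[OF N subsp_diff[OF normed_subsp[OF N] a b]] .
    ultimately show "norm (n (a k - b k)) \<le> n (a k - x) + n (b k - x)" by simp
  qed
qed

lemma dense_ext:
  assumes N: "normed_on S n" and DS: "D \<subseteq> S" and Dsub: "subsp D"
    and dense: "\<forall>x\<in>S. \<forall>\<epsilon>>0. \<exists>d\<in>D. n (x - d) < \<epsilon>"
    and phi: "lin_on D \<phi>" and K: "K \<ge> 0" and bnd: "\<And>d. d \<in> D \<Longrightarrow> \<bar>\<phi> d\<bar> \<le> K * n d"
  shows "\<exists>\<psi>\<in>dual_on S n. (\<forall>d\<in>D. \<psi> d = \<phi> d) \<and> (\<forall>x\<in>S. \<bar>\<psi> x\<bar> \<le> K * n x)"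
proof -
  define A where "A = (\<lambda>x. {a. (\<forall>k. a k \<in> D) \<and> (\<lambda>k. n (a k - x)) \<longlonglongrightarrow> 0})"
  have Ane: "\<exists>a. a \<in> A x" if "x \<in> S" for x
    using dense_seq[OF N DS that] dense that unfolding A_def by blast
  have AS: "a k \<in> S" if "a \<in> A x" for a x k using that DS unfolding A_def by blast
  have same: "(\<lambda>k. \<phi> (a k) - \<phi> (b k)) \<longlonglongrightarrow> 0" if x: "x \<in> S" and a: "a \<in> A x" and b: "b \<in> A x" for x a b
  proof -
    have l: "(\<lambda>k. n (a k - b k)) \<longlonglongrightarrow> 0"
      by (rule lim_diff_tri[OF N x AS[OF a] AS[OF b]]) (use a b in \<open>auto simp: A_def\<close>)
    have l2: "(\<lambda>k. K * n (a k - b k)) \<longlonglongrightarrow> 0" using tendsto_mult[OF tendsto_const l, of K] by simp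
    show ?thesis
    proof (rule Lim_null_comparison[OF _ l2], intro always_eventually allI)
      fix k
      have ak: "a k \<in> D" and bk: "b k \<in> D" using a b unfolding A_def by auto
      have "\<phi> (a k) - \<phi> (b k) = \<phi> (a k - b k)" using lin_diff[OF phi Dsub ak bk] by simp
      then show "norm (\<phi> (a k) - \<phi> (b k)) \<le> K * n (a k - b k)"
        using bnd[OF subsp_diff[OF Dsub ak bk]] by simp
    qed
  qed
  have conv: "convergent (\<lambda>k. \<phi> (a k))" if x: "x \<in> S" and a: "a \<in> A x" for x a
  proof -
    have "Cauchy (\<lambda>k. \<phi> (a k))"
      unfolding Cauchy_def
    proof (intro allI impI)
      fix e :: real assume e: "e > 0"
      have l: "(\<lambda>k. n (a k - x)) \<longlonglongrightarrow> 0" using a unfolding A_def by blast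
      have "e / (2 * K + 1) > 0" using e K by simp
      then obtain M where M: "\<And>k. k \<ge> M \<Longrightarrow> norm (n (a k - x) - 0) < e / (2 * K + 1)"
        using l unfolding LIMSEQ_iff by blast
      have "dist (\<phi> (a m)) (\<phi> (a k)) < e" if m: "m \<ge> M" and k: "k \<ge> M" for m k
      proof -
        have am: "a m \<in> D" and ak: "a k \<in> D" using a unfolding A_def by auto
        have "dist (\<phi> (a m)) (\<phi> (a k)) = \<bar>\<phi> (a m - a k)\<bar>"
          using lin_diff[OF phi Dsub am ak] by (simp add: dist_real_def)
        also have "\<dots> \<le> K * n (a m - a k)" using bnd[OF subsp_diff[OF Dsub am ak]] .
        finally have d1: "dist (\<phi> (a m)) (\<phi> (a k)) \<le> K * n (a m - a k)" .
        have "n (a m - a k) \<le> n (a m - x) + n (a k - x)"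
          using n_tri[OF N AS[OF a] x AS[OF a], of m k] n_commute[OF N x AS[OF a], of k] by simp
        also have "n (a m - x) + n (a k - x) < 2 * (e / (2 * K + 1))"
          using M[OF m] M[OF k] by simp
        finally have d2: "n (a m - a k) \<le> 2 * (e / (2 * K + 1))" by simp
        have "dist (\<phi> (a m)) (\<phi> (a k)) \<le> K * (2 * (e / (2 * K + 1)))"
          using d1 mult_left_mono[OF d2 K] by linarith
        also have "\<dots> < e" using e K by (simp add: field_simps)
        finally show ?thesis .
      qed
      then show "\<exists>M. \<forall>m\<ge>M. \<forall>k\<ge>M. dist (\<phi> (a m)) (\<phi> (a k)) < e" by blast
    qed
    then show ?thesis by (simp add: Cauchy_convergent_iff)
  qed
  define \<psi> where "\<psi> = (\<lambda>x. if x \<in> S then lim (\<lambda>k. \<phi> ((SOME a. a \<in> A x) k)) else 0)"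
  have key: "(\<lambda>k. \<phi> (a k)) \<longlonglongrightarrow> \<psi> x" if x: "x \<in> S" and a: "a \<in> A x" for x a
  proof -
    define a0 where "a0 = (SOME a. a \<in> A x)"
    have a0: "a0 \<in> A x" unfolding a0_def using Ane[OF x] by (metis someI_ex)
    have "(\<lambda>k. \<phi> (a0 k)) \<longlonglongrightarrow> \<psi> x"
      unfolding \<psi>_def a0_def[symmetric] using x conv[OF x a0] by (simp add: convergent_LIMSEQ_iff)
    moreover have "(\<lambda>k. \<phi> (a k) - \<phi> (a0 k)) \<longlonglongrightarrow> 0" by (rule same[OF x a a0])
    ultimately have "(\<lambda>k. \<phi> (a0 k) + (\<phi> (a k) - \<phi> (a0 k))) \<longlonglongrightarrow> \<psi> x + 0" by (intro tendsto_add)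
    then show ?thesis by simp
  qed
  have onD: "\<psi> d = \<phi> d" if d: "d \<in> D" for d
  proof -
    have dS: "d \<in> S" using d DS by blast
    have "(\<lambda>k. d) \<in> A d" unfolding A_def using d n_zero[OF N] by simp
    from key[OF dS this] have "(\<lambda>k. \<phi> d) \<longlonglongrightarrow> \<psi> d" .
    then show ?thesis using LIMSEQ_unique tendsto_const by metis
  qed
  have lin: "lin_on S \<psi>" unfolding lin_on_def
  proof (intro conjI ballI allI)
    fix x y assume x: "x \<in> S" and y: "y \<in> S"
    obtain a b where a: "a \<in> A x" and b: "b \<in> A y" using Ane x y by blast
    have xy: "x + y \<in> S" using subsp_add[OF normed_subsp[OF N] x y] .
    have ab: "(\<lambda>k. a k + b k) \<in> A (x + y)" unfolding A_def
    proof (intro CollectI conjI allI)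
      show "a k + b k \<in> D" for k using a b subsp_add[OF Dsub] unfolding A_def by blast
      have la: "(\<lambda>k. n (a k - x)) \<longlonglongrightarrow> 0" and lb: "(\<lambda>k. n (b k - y)) \<longlonglongrightarrow> 0" using a b unfolding A_def by auto
      show "(\<lambda>k. n (a k + b k - (x + y))) \<longlonglongrightarrow> 0"
      proof (rule Lim_null_comparison[OF _ tendsto_add[OF la lb, simplified]], intro always_eventually allI)
        fix k
        have "a k + b k - (x + y) = (a k - x) + (b k - y)" by simp
        moreover have "a k - x \<in> S" "b k - y \<in> S"
          using subsp_diff[OF normed_subsp[OF N]] AS[OF a] AS[OF b] x y by blast+
        ultimately show "norm (n (a k + b k - (x + y))) \<le> n (a k - x) + n (b k - y)"
          using n_add[OF N] n_nonneg[OF N] subsp_add[OF normed_subsp[OF N]] by (metis real_norm_def abs_of_nonneg)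
      qed
    qed
    have "(\<lambda>k. \<phi> (a k + b k)) \<longlonglongrightarrow> \<psi> (x + y)" by (rule key[OF xy ab])
    moreover have "(\<lambda>k. \<phi> (a k + b k)) = (\<lambda>k. \<phi> (a k) + \<phi> (b k))"
      using lin_add[OF phi] a b unfolding A_def by auto
    moreover have "(\<lambda>k. \<phi> (a k) + \<phi> (b k)) \<longlonglongrightarrow> \<psi> x + \<psi> y" by (intro tendsto_add key x y a b)
    ultimately show "\<psi> (x + y) = \<psi> x + \<psi> y" using LIMSEQ_unique by metis
  next
    fix c :: real and x assume x: "x \<in> S"
    obtain a where a: "a \<in> A x" using Ane x by blast
    have cx: "c *\<^sub>R x \<in> S" using subsp_scale[OF normed_subsp[OF N] x] .
    have ca: "(\<lambda>k. c *\<^sub>R a k) \<in> A (c *\<^sub>R x)" unfolding A_def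
    proof (intro CollectI conjI allI)
      show "c *\<^sub>R a k \<in> D" for k using a subsp_scale[OF Dsub] unfolding A_def by blast
      have la: "(\<lambda>k. n (a k - x)) \<longlonglongrightarrow> 0" using a unfolding A_def by auto
      have "(\<lambda>k. n (c *\<^sub>R (a k - x))) = (\<lambda>k. \<bar>c\<bar> * n (a k - x))"
        using n_scale[OF N subsp_diff[OF normed_subsp[OF N] AS[OF a] x]] by simp
      moreover have "(\<lambda>k. \<bar>c\<bar> * n (a k - x)) \<longlonglongrightarrow> 0" using tendsto_mult[OF tendsto_const la, of "\<bar>c\<bar>"] by simp
      ultimately show "(\<lambda>k. n (c *\<^sub>R a k - c *\<^sub>R x)) \<longlonglongrightarrow> 0" by (simp add: scaleR_diff_right)
    qed
    have "(\<lambda>k. \<phi> (c *\<^sub>R a k)) \<longlonglongrightarrow> \<psi> (c *\<^sub>R x)" by (rule key[OF cx ca])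
    moreover have "(\<lambda>k. \<phi> (c *\<^sub>R a k)) = (\<lambda>k. c * \<phi> (a k))"
      using lin_scale[OF phi] a unfolding A_def by auto
    moreover have "(\<lambda>k. c * \<phi> (a k)) \<longlonglongrightarrow> c * \<psi> x" by (intro tendsto_mult tendsto_const key x a)
    ultimately show "\<psi> (c *\<^sub>R x) = c *\<^sub>R \<psi> x" using LIMSEQ_unique by (metis real_scaleR_def)
  qed
  have bound: "\<bar>\<psi> x\<bar> \<le> K * n x" if x: "x \<in> S" for x
  proof -
    obtain a where a: "a \<in> A x" using Ane x by blast
    have "(\<lambda>k. \<bar>\<phi> (a k)\<bar>) \<longlonglongrightarrow> \<bar>\<psi> x\<bar>" by (intro tendsto_rabs key x a)
    moreover have "(\<lambda>k. K * n (a k)) \<longlonglongrightarrow> K * n x"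
      by (intro tendsto_mult tendsto_const n_tendsto[OF N x AS[OF a]]) (use a in \<open>auto simp: A_def\<close>)
    moreover have "\<forall>k. \<bar>\<phi> (a k)\<bar> \<le> K * n (a k)" using bnd a unfolding A_def by blast
    ultimately show ?thesis by (intro tendsto_le[OF _ _ _ always_eventually]) auto
  qed
  have "\<psi> \<in> dual_on S n"
    by (rule dualI[OF lin bound]) (auto simp: \<psi>_def)
  then show ?thesis using onD bound by blast
qed

lemma dense_uniq:
  assumes N: "normed_on S n" and DS: "D \<subseteq> S"
    and dense: "\<forall>x\<in>S. \<forall>\<epsilon>>0. \<exists>d\<in>D. n (x - d) < \<epsilon>"
    and g1: "g1 \<in> dual_on S n" and g2: "g2 \<in> dual_on S n" and eq: "\<And>d. d \<in> D \<Longrightarrow> g1 d = g2 d"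
  shows "g1 = g2"
proof
  fix x show "g1 x = g2 x"
  proof (cases "x \<in> S")
    case False then show ?thesis using dualD[OF g1] dualD[OF g2] by simp
  next
    case x: True
    obtain a where a: "\<And>k. a k \<in> D" "(\<lambda>k. n (a k - x)) \<longlonglongrightarrow> 0"
      using dense_seq[OF N DS x] dense x by blast
    have aS: "\<And>k. a k \<in> S" using a DS by blast
    have "(\<lambda>k. g1 (a k)) \<longlonglongrightarrow> g1 x" by (rule dual_cont[OF g1 N x aS a(2)])
    moreover have "(\<lambda>k. g1 (a k)) \<longlonglongrightarrow> g2 x" using dual_cont[OF g2 N x aS a(2)] eq a(1) by simp
    ultimately show ?thesis using LIMSEQ_unique by blast
  qed
qed

lemma dense_bound:
  assumes N: "normed_on S n" and DS: "D \<subseteq> S"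
    and dense: "\<forall>x\<in>S. \<forall>\<epsilon>>0. \<exists>d\<in>D. n (x - d) < \<epsilon>"
    and g: "g \<in> dual_on S n" and b: "\<And>d. d \<in> D \<Longrightarrow> \<bar>g d\<bar> \<le> M * n d" and x: "x \<in> S"
  shows "\<bar>g x\<bar> \<le> M * n x"
proof -
  obtain a where a: "\<And>k. a k \<in> D" "(\<lambda>k. n (a k - x)) \<longlonglongrightarrow> 0"
    using dense_seq[OF N DS x] dense x by blast
  have aS: "\<And>k. a k \<in> S" using a DS by blast
  have "(\<lambda>k. \<bar>g (a k)\<bar>) \<longlonglongrightarrow> \<bar>g x\<bar>" by (intro tendsto_rabs dual_cont[OF g N x aS a(2)])
  moreover have "(\<lambda>k. M * n (a k)) \<longlonglongrightarrow> M * n x" by (intro tendsto_mult tendsto_const n_tendsto[OF N x aS a(2)])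
  ultimately show ?thesis using b a(1) by (intro tendsto_le[OF _ _ _ always_eventually]) auto
qed

lemma norming:
  assumes N: "normed_on S n" and y: "y \<in> S"
  shows "\<exists>h\<in>dual_on S n. opnorm S n h \<le> 1 \<and> h y = n y"
proof -
  have S: "subsp S" using normed_subsp[OF N] .
  have nsl: "sublin_on S n" unfolding sublin_on_def using n_add[OF N] n_scale[OF N] by simp
  obtain L where L: "lin_on S L" "\<forall>z\<in>S. L z \<le> shiftf S n y z"
    using HB_sublinear[OF S shift_sublin[OF S nsl y]] by blast
  have Ln: "L z \<le> n z" if "z \<in> S" for z using L(2) shift_below[OF S nsl y that] that by force
  have "L (- y) \<le> - n y" using L(2) shift_neg[OF S nsl y] subsp_neg[OF S y] by force
  then have "L y \<ge> n y" using lin_neg[OF L(1) y] by simp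
  then have Ly: "L y = n y" using Ln[OF y] by simp
  have absL: "\<bar>L z\<bar> \<le> n z" if z: "z \<in> S" for z
  proof -
    have "- L z \<le> n z" using Ln[OF subsp_neg[OF S z]] lin_neg[OF L(1) z] n_neg[OF N z] by simp
    then show ?thesis using Ln[OF z] by simp
  qed
  define h where "h = (\<lambda>z. if z \<in> S then L z else 0)"
  have hlin: "lin_on S h" using L(1) S unfolding lin_on_def h_def by (simp add: subsp_add subsp_scale)
  have hd: "h \<in> dual_on S n" by (rule dualI[OF hlin, of 1]) (auto simp: h_def absL)
  have "opnorm S n h \<le> 1" by (rule opnorm_le[OF N]) (auto simp: h_def absL)
  then show ?thesis using hd Ly y unfolding h_def by auto
qed

section \<open>CB spaces\<close>

lemma cb_normed: "cb_space T n \<Longrightarrow> normed_on T n"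
  by (simp add: cb_space_def bk_space_def banach_on_def)

lemma cb_tendsto:
  assumes cb: "cb_space T n" and G: "G \<in> dual_on T n" and c: "c \<in> T"
  shows "(\<lambda>k. \<Sum>i<k. c i * G (unitvec i)) \<longlonglongrightarrow> G c"
proof -
  have N: "normed_on T n" using cb_normed[OF cb] .
  have e: "\<And>i. unitvec i \<in> T" using cb by (simp add: cb_space_def)
  have p: "\<And>k. (\<Sum>i<k. c i *\<^sub>R unitvec i) \<in> T" using subsp_sum[OF normed_subsp[OF N]] e by blast
  have l: "(\<lambda>k. n (c - (\<Sum>i<k. c i *\<^sub>R unitvec i))) \<longlonglongrightarrow> 0" using cb c by (simp add: cb_space_def)
  have l2: "(\<lambda>k. n ((\<Sum>i<k. c i *\<^sub>R unitvec i) - c)) \<longlonglongrightarrow> 0"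
    using l n_commute[OF N c p] by simp
  have "(\<lambda>k. G (\<Sum>i<k. c i *\<^sub>R unitvec i)) \<longlonglongrightarrow> G c"
    by (rule dual_cont[OF G N c, of "\<lambda>k. \<Sum>i<k. c i *\<^sub>R unitvec i"]) (use p l2 in auto)
  moreover have "G (\<Sum>i<k. c i *\<^sub>R unitvec i) = (\<Sum>i<k. c i * G (unitvec i))" for k
    using lin_sum[OF _ normed_subsp[OF N], of G "{..<k}" unitvec c] dualD[OF G] e by simp
  ultimately show ?thesis by simp
qed

lemma cb_uniq:
  assumes cb: "cb_space T n" and G1: "G1 \<in> dual_on T n" and G2: "G2 \<in> dual_on T n"
    and eq: "\<And>i. G1 (unitvec i) = G2 (unitvec i)"
  shows "G1 = G2"
proof
  fix c show "G1 c = G2 c"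
  proof (cases "c \<in> T")
    case False then show ?thesis using dualD[OF G1] dualD[OF G2] by simp
  next
    case True
    show ?thesis using cb_tendsto[OF cb G1 True] cb_tendsto[OF cb G2 True] eq LIMSEQ_unique by simp
  qed
qed




lemma lim_uniq:
  assumes N: "normed_on S n" and y: "y \<in> S" and y': "y' \<in> S" and u: "\<And>k. u k \<in> S"
    and l: "(\<lambda>k. n (u k - y)) \<longlonglongrightarrow> 0" and l': "(\<lambda>k. n (u k - y')) \<longlonglongrightarrow> 0"
  shows "y = y'"
proof -
  have "(\<lambda>k. n (u k - y) + n (u k - y')) \<longlonglongrightarrow> 0" using tendsto_add[OF l l'] by simp
  moreover have "n (y - y') \<le> n (u k - y) + n (u k - y')" for k
    using n_tri[OF N y u y', of k] n_commute[OF N y u, of k] by simp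
  ultimately have "n (y - y') \<le> 0"
    by (intro tendsto_le[OF _ _ tendsto_const always_eventually]) auto
  then have "n (y - y') = 0" using n_nonneg[OF N subsp_diff[OF normed_subsp[OF N] y y']] by simp
  then show ?thesis using n_eq0[OF N subsp_diff[OF normed_subsp[OF N] y y']] by simp
qed

locale Fsp =
  fixes X :: "nat \<Rightarrow> 'a::real_vector set" and ns :: "nat \<Rightarrow> 'a \<Rightarrow> real"
  assumes F: "F_seq X ns"
begin

lemma N: "normed_on (X s) (ns s)"
  using F by (simp add: F_seq_def banach_on_def)
lemma comp: "complete_on (X s) (ns s)"
  using F by (simp add: F_seq_def banach_on_def)
lemma sub: "subsp (X s)" using normed_subsp[OF N] .

lemma mono_set: "s \<le> t \<Longrightarrow> X t \<subseteq> X s"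
proof (induction t rule: dec_induct)
  case base then show ?case by simp
next
  case (step t) then show ?case using F by (auto simp: F_seq_def)
qed

lemma mono_norm: "s \<le> t \<Longrightarrow> x \<in> X t \<Longrightarrow> ns s x \<le> ns t x"
proof (induction t rule: dec_induct)
  case base then show ?case by simp
next
  case (step t)
  have "x \<in> X t" using step.prems F by (auto simp: F_seq_def)
  then have "ns s x \<le> ns t x" using step.IH by blast
  also have "\<dots> \<le> ns (Suc t) x" using F step.prems by (auto simp: F_seq_def)
  finally show ?case .
qed

lemma XF_sub: "(\<Inter>s. X s) \<subseteq> X s" by blast

lemma XF_subsp: "subsp (\<Inter>s. X s)"
  unfolding subsp_def using sub by (auto intro: subsp_0 subsp_add subsp_scale)

lemma dense: "\<forall>x\<in>X s. \<forall>\<epsilon>>0. \<exists>d\<in>(\<Inter>t. X t). ns s (x - d) < \<epsilon>"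
  using F by (simp add: F_seq_def)

lemma F_limit:
  assumes u: "\<And>k. u k \<in> (\<Inter>s. X s)"
    and C: "\<And>s \<epsilon>. \<epsilon> > 0 \<Longrightarrow> \<exists>M. \<forall>m\<ge>M. \<forall>k\<ge>M. ns s (u m - u k) < \<epsilon>"
  shows "\<exists>y\<in>(\<Inter>s. X s). \<forall>s. (\<lambda>k. ns s (u k - y)) \<longlonglongrightarrow> 0"
proof -
  have "\<forall>s. \<exists>y\<in>X s. (\<lambda>k. ns s (u k - y)) \<longlonglongrightarrow> 0"
  proof
    fix s
    have "(\<forall>k. u k \<in> X s) \<and> (\<forall>\<epsilon>>0. \<exists>N. \<forall>m\<ge>N. \<forall>k\<ge>N. ns s (u m - u k) < \<epsilon>)" using u C by blast
    then show "\<exists>y\<in>X s. (\<lambda>k. ns s (u k - y)) \<longlonglongrightarrow> 0" using comp[of s] unfolding complete_on_def by blast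
  qed
  then obtain Y where Y: "\<And>s. Y s \<in> X s" "\<And>s. (\<lambda>k. ns s (u k - Y s)) \<longlonglongrightarrow> 0" by metis
  have eq: "Y s = Y 0" for s
  proof (induction s)
    case 0 then show ?case by simp
  next
    case (Suc s)
    have YS: "Y (Suc s) \<in> X s" using Y(1)[of "Suc s"] mono_set[of s "Suc s"] by auto
    have uS: "u k - Y (Suc s) \<in> X (Suc s)" for k using u Y(1) subsp_diff[OF sub] by blast
    have "(\<lambda>k. ns s (u k - Y (Suc s))) \<longlonglongrightarrow> 0"
    proof (rule Lim_null_comparison[OF _ Y(2)[of "Suc s"]], intro always_eventually allI)
      fix k
      have "ns s (u k - Y (Suc s)) \<le> ns (Suc s) (u k - Y (Suc s))" using mono_norm[of s "Suc s" "u k - Y (Suc s)"] uS[of k] by simp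
      have "u k - Y (Suc s) \<in> X s" using uS[of k] mono_set[of s "Suc s"] by auto
      then have "ns s (u k - Y (Suc s)) \<ge> 0" by (rule n_nonneg[OF N])
      moreover note \<open>ns s (u k - Y (Suc s)) \<le> ns (Suc s) (u k - Y (Suc s))\<close>
      ultimately show "norm (ns s (u k - Y (Suc s))) \<le> ns (Suc s) (u k - Y (Suc s))" by simp
    qed
    then have "Y (Suc s) = Y s" using lim_uniq[OF N YS Y(1) _ _ Y(2)] u by blast
    then show ?case using Suc by simp
  qed
  have "Y 0 \<in> (\<Inter>s. X s)" using Y(1) eq by (metis INT_I)
  moreover have "\<forall>s. (\<lambda>k. ns s (u k - Y 0)) \<longlonglongrightarrow> 0" using Y(2) eq by metis
  ultimately show ?thesis by blast
qed

end




definition sgf :: "(nat \<Rightarrow> real) set \<Rightarrow> ((nat \<Rightarrow> real) \<Rightarrow> real) \<Rightarrow> (nat \<Rightarrow> real) \<Rightarrow> (nat \<Rightarrow> real) \<Rightarrow> real" where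
  "sgf T n d = (SOME g. g \<in> dual_on T n \<and> (\<forall>i. d i = g (unitvec i)))"

lemma sgf: "d \<in> seqdual T n \<Longrightarrow> sgf T n d \<in> dual_on T n \<and> (\<forall>i. d i = sgf T n d (unitvec i))"
proof -
  assume "d \<in> seqdual T n"
  then have "\<exists>g. g \<in> dual_on T n \<and> (\<forall>i. d i = g (unitvec i))" by (auto simp: seqdual_def)
  then show ?thesis unfolding sgf_def by (rule someI_ex)
qed

lemma sdn_eq: "seqdual_norm T n d = opnorm T n (sgf T n d)"
  by (simp add: seqdual_norm_def sgf_def)

lemma cauchy_transfer:
  assumes N: "normed_on S n" and NT: "normed_on T' t" and u: "\<And>k. u k \<in> S" and e: "\<And>k. e k \<in> T'"
    and c: "c \<in> T'" and l: "(\<lambda>k. t (c - e k)) \<longlonglongrightarrow> 0" and B: "B \<ge> 0"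
    and b: "\<And>m k. m \<le> k \<Longrightarrow> n (u k - u m) \<le> B * t (e k - e m)"
  shows "\<forall>\<epsilon>>0. \<exists>M. \<forall>m\<ge>M. \<forall>k\<ge>M. n (u m - u k) < \<epsilon>"
proof (intro allI impI)
  fix \<epsilon> :: real assume \<epsilon>: "\<epsilon> > 0"
  have "\<epsilon> / (2 * B + 1) > 0" using \<epsilon> B by simp
  then obtain M where M: "\<And>k. k \<ge> M \<Longrightarrow> norm (t (c - e k) - 0) < \<epsilon> / (2 * B + 1)"
    using l unfolding LIMSEQ_iff by blast
  have main: "n (u k - u m) < \<epsilon>" if "m \<ge> M" "k \<ge> M" "m \<le> k" for m k
  proof -
    have "t (e k - e m) \<le> t (e k - c) + t (c - e m)" using n_tri[OF NT e c e] .
    moreover have "t (e k - c) = t (c - e k)" using n_commute[OF NT e c] .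
    ultimately have tt: "t (e k - e m) \<le> t (c - e k) + t (c - e m)" by simp
    have "t (c - e k) < \<epsilon> / (2 * B + 1)" "t (c - e m) < \<epsilon> / (2 * B + 1)"
      using M[OF that(2)] M[OF that(1)] by (simp_all add: abs_less_iff)
    then have "t (e k - e m) < 2 * (\<epsilon> / (2 * B + 1))" using tt by simp
    then have "B * t (e k - e m) \<le> B * (2 * (\<epsilon> / (2 * B + 1)))" using B mult_left_mono less_imp_le by blast
    also have "\<dots> < \<epsilon>" using \<epsilon> B by (simp add: field_simps)
    finally show ?thesis using b[OF that(3)] by simp
  qed
  have "n (u m - u k) < \<epsilon>" if "m \<ge> M" "k \<ge> M" for m k
  proof (cases "m \<le> k")
    case True then show ?thesis using main[OF that True] n_commute[OF N u u, of k m] by simp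
  next
    case False then show ?thesis using main[OF that(2,1)] by simp
  qed
  then show "\<exists>M. \<forall>m\<ge>M. \<forall>k\<ge>M. n (u m - u k) < \<epsilon>" by blast
qed

locale Setting = FX: Fsp X ns + FT: Fsp T tn
  for X :: "nat \<Rightarrow> 'a::real_vector set" and ns :: "nat \<Rightarrow> 'a \<Rightarrow> real"
  and T :: "nat \<Rightarrow> (nat \<Rightarrow> real) set" and tn :: "nat \<Rightarrow> (nat \<Rightarrow> real) \<Rightarrow> real" +
  fixes g :: "nat \<Rightarrow> 'a \<Rightarrow> real"
  assumes cb: "\<And>s. cb_space (T s) (tn s)"
    and Fb: "F_bessel X ns T tn g"
begin

abbreviation "XF \<equiv> (\<Inter>s. X s)"
abbreviation "TF \<equiv> (\<Inter>s. T s)"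

lemma unitvecF: "unitvec i \<in> TF" using cb by (simp add: cb_space_def)

lemma psumT: "finite I \<Longrightarrow> (\<Sum>i\<in>I. c i *\<^sub>R unitvec i) \<in> TF"
  using subsp_sum[OF FT.XF_subsp] unitvecF by blast

lemma g_lin: "lin_on XF (g i)" using Fb by (simp add: F_bessel_def Fdual_def)
lemma gT: "x \<in> XF \<Longrightarrow> (\<lambda>i. g i x) \<in> TF" using Fb by (simp add: F_bessel_def)

lemma gB: "\<exists>B>0. \<forall>x\<in>XF. tn s (\<lambda>i. g i x) \<le> B * ns s x"
proof -
  have "\<exists>B. \<forall>x\<in>XF. tn s (\<lambda>i. g i x) \<le> B * ns s x" using Fb unfolding F_bessel_def by blast
  then obtain B where B: "\<forall>x\<in>XF. tn s (\<lambda>i. g i x) \<le> B * ns s x" by blast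
  have "\<forall>x\<in>XF. tn s (\<lambda>i. g i x) \<le> (max B 0 + 1) * ns s x"
  proof
    fix x assume x: "x \<in> XF"
    have "ns s x \<ge> 0" using n_nonneg[OF FX.N] x by blast
    then have "B * ns s x \<le> (max B 0 + 1) * ns s x" by (simp add: mult_right_mono)
    moreover have "tn s (\<lambda>i. g i x) \<le> B * ns s x" using B x by blast
    ultimately show "tn s (\<lambda>i. g i x) \<le> (max B 0 + 1) * ns s x" by linarith
  qed
  then show ?thesis by (intro exI[of _ "max B 0 + 1"]) auto
qed

lemma g_add: "x \<in> XF \<Longrightarrow> y \<in> XF \<Longrightarrow> (\<lambda>i. g i (x + y)) = (\<lambda>i. g i x) + (\<lambda>i. g i y)"
  using lin_add[OF g_lin] by (auto simp: fun_eq_iff)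
lemma g_scale: "x \<in> XF \<Longrightarrow> (\<lambda>i. g i (c *\<^sub>R x)) = c *\<^sub>R (\<lambda>i. g i x)"
  using lin_scale[OF g_lin] by (auto simp: fun_eq_iff scaleR_fun_def)

lemma esum_tendsto: "c \<in> TF \<Longrightarrow> (\<lambda>k. tn s ((\<Sum>i<k. c i *\<^sub>R unitvec i) - c)) \<longlonglongrightarrow> 0"
proof -
  assume c: "c \<in> TF"
  have "(\<lambda>k. tn s (c - (\<Sum>i<k. c i *\<^sub>R unitvec i))) \<longlonglongrightarrow> 0" using cb[of s] c by (simp add: cb_space_def)
  moreover have "tn s (c - (\<Sum>i<k. c i *\<^sub>R unitvec i)) = tn s ((\<Sum>i<k. c i *\<^sub>R unitvec i) - c)" for k
    using n_commute[OF FT.N, of c s "\<Sum>i<k. c i *\<^sub>R unitvec i"] c psumT[of "{..<k}" c] by blast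
  ultimately show ?thesis by simp
qed

lemma pairing:
  assumes f: "\<And>i. f i \<in> XF" and h: "h \<in> dual_on (X s) (ns s)"
    and d: "(\<lambda>i. h (f i)) \<in> seqdual (T s) (tn s)" and I: "finite I"
  shows "h (\<Sum>i\<in>I. c i *\<^sub>R f i) = sgf (T s) (tn s) (\<lambda>i. h (f i)) (\<Sum>i\<in>I. c i *\<^sub>R unitvec i)"
proof -
  define G where "G = sgf (T s) (tn s) (\<lambda>i. h (f i))"
  have G: "G \<in> dual_on (T s) (tn s)" "\<And>i. h (f i) = G (unitvec i)" using sgf[OF d, folded G_def] by blast+
  have "h (\<Sum>i\<in>I. c i *\<^sub>R f i) = (\<Sum>i\<in>I. c i *\<^sub>R h (f i))"
    by (rule lin_sum[OF _ FX.sub I]) (use dualD[OF h] f in auto)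
  also have "\<dots> = (\<Sum>i\<in>I. c i *\<^sub>R G (unitvec i))" using G(2) by simp
  also have "\<dots> = G (\<Sum>i\<in>I. c i *\<^sub>R unitvec i)"
    by (rule lin_sum[OF _ FT.sub I, symmetric]) (use dualD[OF G(1)] unitvecF in auto)
  finally show ?thesis unfolding G_def .
qed

lemma SB:
  assumes DF: "DF_bessel X ns T tn f"
  shows "\<exists>B\<ge>0. \<forall>I c. finite I \<longrightarrow> ns s (\<Sum>i\<in>I. c i *\<^sub>R f i) \<le> B * tn s (\<Sum>i\<in>I. c i *\<^sub>R unitvec i)"
proof -
  have f: "\<And>i. f i \<in> XF" using DF by (simp add: DF_bessel_def)
  have "\<exists>B. \<forall>h\<in>dual_on (X s) (ns s). (\<lambda>i. h (f i)) \<in> seqdual (T s) (tn s)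
      \<and> seqdual_norm (T s) (tn s) (\<lambda>i. h (f i)) \<le> B * opnorm (X s) (ns s) h"
    using DF unfolding DF_bessel_def bessel_cond_def by blast
  then obtain B where B: "\<forall>h\<in>dual_on (X s) (ns s). (\<lambda>i. h (f i)) \<in> seqdual (T s) (tn s)
      \<and> seqdual_norm (T s) (tn s) (\<lambda>i. h (f i)) \<le> B * opnorm (X s) (ns s) h" by blast
  have *: "ns s (\<Sum>i\<in>I. c i *\<^sub>R f i) \<le> max B 0 * tn s (\<Sum>i\<in>I. c i *\<^sub>R unitvec i)" if I: "finite I" for I c
  proof -
    let ?y = "\<Sum>i\<in>I. c i *\<^sub>R f i"
    let ?p = "\<Sum>i\<in>I. c i *\<^sub>R unitvec i"
    have y: "?y \<in> X s" using subsp_sum[OF FX.sub I] f by blast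
    have p: "?p \<in> T s" using psumT[OF I] by blast
    obtain h where h: "h \<in> dual_on (X s) (ns s)" "opnorm (X s) (ns s) h \<le> 1" "h ?y = ns s ?y"
      using norming[OF FX.N y] by blast
    have d: "(\<lambda>i. h (f i)) \<in> seqdual (T s) (tn s)" and dn: "seqdual_norm (T s) (tn s) (\<lambda>i. h (f i)) \<le> B * opnorm (X s) (ns s) h"
      using B h(1) by blast+
    let ?G = "sgf (T s) (tn s) (\<lambda>i. h (f i))"
    have G: "?G \<in> dual_on (T s) (tn s)" using sgf[OF d] by blast
    have og: "opnorm (T s) (tn s) ?G \<le> max B 0" 
    proof -
      have o: "0 \<le> opnorm (X s) (ns s) h" using opnorm_facts(2)[OF h(1) FX.N] .
      have "B * opnorm (X s) (ns s) h \<le> max B 0 * opnorm (X s) (ns s) h" using o by (simp add: mult_right_mono)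
      also have "\<dots> \<le> max B 0" using h(2) mult_left_le[of "opnorm (X s) (ns s) h" "max B 0"] by simp
      finally have "B * opnorm (X s) (ns s) h \<le> max B 0" .
      moreover have "seqdual_norm (T s) (tn s) (\<lambda>i. h (f i)) = opnorm (T s) (tn s) ?G" by (rule sdn_eq)
      ultimately show ?thesis using dn by linarith
    qed
    have "ns s ?y = ?G ?p" using h(3) pairing[OF f h(1) d I] by simp
    also have "\<dots> \<le> opnorm (T s) (tn s) ?G * tn s ?p" using opnorm_bound[OF G FT.N p] by simp
    also have "\<dots> \<le> max B 0 * tn s ?p"
      using og n_nonneg[OF FT.N p] by (simp add: mult_right_mono)
    finally show ?thesis .
  qed
  show ?thesis
  proof (intro exI[of _ "max B 0"] conjI allI impI)
    show "0 \<le> max B 0" by simp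
    fix I :: "nat set" and c assume "finite I"
    then show "ns s (\<Sum>i\<in>I. c i *\<^sub>R f i) \<le> max B 0 * tn s (\<Sum>i\<in>I. c i *\<^sub>R unitvec i)" by (rule *)
  qed
qed

end




lemma sum_lt_diff: "m \<le> (k::nat) \<Longrightarrow> (\<Sum>i<k. F i) - (\<Sum>i<m. F i) = (\<Sum>i\<in>{m..<k}. (F i :: 'a::ab_group_add))"
  by (metis atLeast0LessThan sum_diff_nat_ivl zero_le)

context Setting begin

lemma forward:
  assumes DF: "DF_bessel X ns T tn f" and R: "F_reconstructs X ns g f"
  shows "F_frame X ns T tn g"
proof -
  have f: "\<And>i. f i \<in> XF" using DF by (simp add: DF_bessel_def)
  have "\<forall>s. \<exists>B\<ge>0. \<forall>I c. finite I \<longrightarrow> ns s (\<Sum>i\<in>I. c i *\<^sub>R f i) \<le> B * tn s (\<Sum>i\<in>I. c i *\<^sub>R unitvec i)"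
    using SB[OF DF] by blast
  then obtain Bf where Bf0: "\<And>s. Bf s \<ge> 0"
    and Bf: "\<And>s I c. finite I \<Longrightarrow> ns s (\<Sum>i\<in>I. c i *\<^sub>R f i) \<le> Bf s * tn s (\<Sum>i\<in>I. c i *\<^sub>R unitvec i)"
    by metis
  define P where "P = (\<lambda>c k. \<Sum>i<k. c i *\<^sub>R f i)"
  define E where "E = (\<lambda>(c::nat \<Rightarrow> real) k. \<Sum>i<k. c i *\<^sub>R unitvec i)"
  have PF: "P c k \<in> XF" for c k unfolding P_def using subsp_sum[OF FX.XF_subsp] f by blast
  have EF: "E c k \<in> TF" for c k unfolding E_def using psumT by blast
  have Pdiff: "P c k - P c m = (\<Sum>i\<in>{m..<k}. c i *\<^sub>R f i)" if "m \<le> k" for c m k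
    unfolding P_def using sum_lt_diff[OF that] .
  have Ediff: "E c k - E c m = (\<Sum>i\<in>{m..<k}. c i *\<^sub>R unitvec i)" if "m \<le> k" for c m k
    unfolding E_def using sum_lt_diff[OF that] .
  have lim: "\<exists>y\<in>XF. \<forall>s. (\<lambda>k. ns s (P c k - y)) \<longlonglongrightarrow> 0" if c: "c \<in> TF" for c
  proof (rule FX.F_limit)
    show "P c k \<in> XF" for k by (rule PF)
    fix s and \<epsilon> :: real assume e: "\<epsilon> > 0"
    have l: "(\<lambda>k. tn s (c - E c k)) \<longlonglongrightarrow> 0" using cb[of s] c unfolding E_def by (simp add: cb_space_def)
    have "\<forall>\<epsilon>>0. \<exists>M. \<forall>m\<ge>M. \<forall>k\<ge>M. ns s (P c m - P c k) < \<epsilon>"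
    proof (rule cauchy_transfer[where u = "P c" and e = "E c", OF FX.N[of s] FT.N[of s] _ _ _ l Bf0[of s]])
      show "P c k \<in> X s" for k using PF by blast
      show "E c k \<in> T s" for k using EF by blast
      show "c \<in> T s" using c by blast
      fix m k :: nat assume mk: "m \<le> k"
      show "ns s (P c k - P c m) \<le> Bf s * tn s (E c k - E c m)"
        unfolding Pdiff[OF mk] Ediff[OF mk] by (rule Bf) simp
    qed
    then show "\<exists>M. \<forall>m\<ge>M. \<forall>k\<ge>M. ns s (P c m - P c k) < \<epsilon>" using e by blast
  qed
  define V where "V = (\<lambda>c. SOME y. y \<in> XF \<and> (\<forall>s. (\<lambda>k. ns s (P c k - y)) \<longlonglongrightarrow> 0))"
  have Vp: "V c \<in> XF \<and> (\<forall>s. (\<lambda>k. ns s (P c k - V c)) \<longlonglongrightarrow> 0)" if c: "c \<in> TF" for c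
    unfolding V_def by (rule someI_ex) (use lim[OF c] in blast)
  have Vuniq: "V c = y" if c: "c \<in> TF" and y: "y \<in> XF" and l: "(\<lambda>k. ns 0 (P c k - y)) \<longlonglongrightarrow> 0" for c y
  proof -
    have a: "V c \<in> X 0" using Vp[OF c] by blast
    have b: "y \<in> X 0" using y by blast
    have u: "\<And>k. P c k \<in> X 0" using PF by blast
    have l0: "(\<lambda>k. ns 0 (P c k - V c)) \<longlonglongrightarrow> 0" using Vp[OF c] by blast
    show ?thesis by (rule lim_uniq[OF FX.N a b u l0 l])
  qed
  have Vbound: "ns s (V c) \<le> Bf s * tn s c" if c: "c \<in> TF" for c s
  proof -
    have "(\<lambda>k. ns s (P c k)) \<longlonglongrightarrow> ns s (V c)"
      by (rule n_tendsto[OF FX.N]) (use Vp[OF c] PF in blast)+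
    moreover have "(\<lambda>k. Bf s * tn s (E c k)) \<longlonglongrightarrow> Bf s * tn s c"
      by (intro tendsto_mult tendsto_const n_tendsto[OF FT.N])
         (use c EF esum_tendsto[OF c, of s] in \<open>auto simp: E_def\<close>)
    moreover have "ns s (P c k) \<le> Bf s * tn s (E c k)" for k unfolding P_def E_def by (rule Bf) simp
    ultimately show ?thesis by (intro tendsto_le[OF _ _ _ always_eventually]) auto
  qed
  have Vg: "V (\<lambda>i. g i x) = x" if x: "x \<in> XF" for x
  proof (rule Vuniq[OF gT[OF x] x])
    have "(\<lambda>n. ns 0 (x - (\<Sum>i<n. g i x *\<^sub>R f i))) \<longlonglongrightarrow> 0" using R x unfolding F_reconstructs_def by blast
    moreover have "ns 0 (x - P (\<lambda>i. g i x) k) = ns 0 (P (\<lambda>i. g i x) k - x)" for k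
      using n_commute[OF FX.N, of x 0 "P (\<lambda>i. g i x) k"] x PF by blast
    ultimately show "(\<lambda>k. ns 0 (P (\<lambda>i. g i x) k - x)) \<longlonglongrightarrow> 0" unfolding P_def by simp
  qed
  have Vlin: "lin_on TF V" unfolding lin_on_def
  proof (intro conjI ballI allI)
    fix c1 c2 assume c1: "c1 \<in> TF" and c2: "c2 \<in> TF"
    have c12: "c1 + c2 \<in> TF" using subsp_add[OF FT.XF_subsp c1 c2] .
    have VV: "V c1 + V c2 \<in> XF"
    proof -
      have "V c1 \<in> XF" "V c2 \<in> XF" using Vp[OF c1] Vp[OF c2] by simp_all
      then show ?thesis by (rule subsp_add[OF FX.XF_subsp])
    qed
    show "V (c1 + c2) = V c1 + V c2"
    proof (rule Vuniq[OF c12 VV])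
      have l1: "(\<lambda>k. ns 0 (P c1 k - V c1)) \<longlonglongrightarrow> 0" and l2: "(\<lambda>k. ns 0 (P c2 k - V c2)) \<longlonglongrightarrow> 0"
        using Vp c1 c2 by blast+
      have eqP: "P (c1 + c2) k = P c1 k + P c2 k" for k
        unfolding P_def by (simp only: plus_fun_apply scaleR_add_left sum.distrib)
      show "(\<lambda>k. ns 0 (P (c1 + c2) k - (V c1 + V c2))) \<longlonglongrightarrow> 0"
      proof (rule Lim_null_comparison[OF _ tendsto_add[OF l1 l2, simplified]], intro always_eventually allI)
        fix k
        have v1: "V c1 \<in> X 0" "V c2 \<in> X 0" using Vp[OF c1] Vp[OF c2] by simp_all
        have p1: "P c1 k \<in> X 0" "P c2 k \<in> X 0" "P (c1 + c2) k \<in> X 0" using PF by blast+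
        have vv: "V c1 + V c2 \<in> X 0" using VV by blast
        have a: "P c1 k - V c1 \<in> X 0" "P c2 k - V c2 \<in> X 0"
          using subsp_diff[OF FX.sub p1(1) v1(1)] subsp_diff[OF FX.sub p1(2) v1(2)] .
        have E: "P (c1 + c2) k - (V c1 + V c2) = (P c1 k - V c1) + (P c2 k - V c2)" unfolding eqP by simp
        have "ns 0 (P (c1 + c2) k - (V c1 + V c2)) \<le> ns 0 (P c1 k - V c1) + ns 0 (P c2 k - V c2)"
          unfolding E by (rule n_add[OF FX.N a])
        moreover have "ns 0 (P (c1 + c2) k - (V c1 + V c2)) \<ge> 0"
          using n_nonneg[OF FX.N subsp_diff[OF FX.sub p1(3) vv]] .
        ultimately show "norm (ns 0 (P (c1 + c2) k - (V c1 + V c2))) \<le> ns 0 (P c1 k - V c1) + ns 0 (P c2 k - V c2)"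
          by simp
      qed
    qed
  next
    fix a :: real and c assume c: "c \<in> TF"
    have ac: "a *\<^sub>R c \<in> TF" using subsp_scale[OF FT.XF_subsp c] .
    have aV: "a *\<^sub>R V c \<in> XF"
    proof -
      have "V c \<in> XF" using Vp[OF c] by simp
      then show ?thesis by (rule subsp_scale[OF FX.XF_subsp])
    qed
    show "V (a *\<^sub>R c) = a *\<^sub>R V c"
    proof (rule Vuniq[OF ac aV])
      have l: "(\<lambda>k. ns 0 (P c k - V c)) \<longlonglongrightarrow> 0" using Vp c by blast
      have eqP: "P (a *\<^sub>R c) k = a *\<^sub>R P c k" for k
        unfolding P_def by (simp only: scaleR_fun_def scaleR_scaleR scaleR_sum_right real_scaleR_def)
      have "ns 0 (P (a *\<^sub>R c) k - a *\<^sub>R V c) = \<bar>a\<bar> * ns 0 (P c k - V c)" for k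
      proof -
        have "P (a *\<^sub>R c) k - a *\<^sub>R V c = a *\<^sub>R (P c k - V c)" unfolding eqP by (simp add: scaleR_diff_right)
        moreover have "P c k - V c \<in> X 0"
        proof -
          have "P c k \<in> X 0" "V c \<in> X 0" using PF Vp[OF c] by simp_all
          then show ?thesis using subsp_diff[OF FX.sub] by blast
        qed
        ultimately show ?thesis using n_scale[OF FX.N] by simp
      qed
      moreover have "(\<lambda>k. \<bar>a\<bar> * ns 0 (P c k - V c)) \<longlonglongrightarrow> 0" using tendsto_mult[OF tendsto_const l, of "\<bar>a\<bar>"] by simp
      ultimately show "(\<lambda>k. ns 0 (P (a *\<^sub>R c) k - a *\<^sub>R V c)) \<longlonglongrightarrow> 0" by simp
    qed
  qed
  have lower: "\<exists>A>0. \<forall>x\<in>XF. A * ns s x \<le> tn s (\<lambda>i. g i x)" for s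
  proof (intro exI[of _ "1 / (Bf s + 1)"] conjI ballI)
    show "0 < 1 / (Bf s + 1)" using Bf0[of s] by simp
    fix x assume x: "x \<in> XF"
    have "ns s x \<le> Bf s * tn s (\<lambda>i. g i x)" using Vbound[OF gT[OF x], of s] Vg[OF x] by simp
    also have "\<dots> \<le> (Bf s + 1) * tn s (\<lambda>i. g i x)"
      using n_nonneg[OF FT.N, of "\<lambda>i. g i x" s] gT[OF x] by (simp add: distrib_right)
    finally show "1 / (Bf s + 1) * ns s x \<le> tn s (\<lambda>i. g i x)" using Bf0[of s]
      by (simp add: field_simps)
  qed
  have "pre_F_frame X ns T tn g" unfolding pre_F_frame_def using Fb lower by blast
  moreover have "\<forall>c\<in>TF. V c \<in> XF" using Vp by blast
  moreover have "\<forall>s. \<exists>K. \<forall>c\<in>TF. ns s (V c) \<le> K * tn s c" using Vbound by blast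
  moreover have "\<forall>x\<in>XF. V (\<lambda>i. g i x) = x" using Vg by blast
  ultimately show ?thesis unfolding F_frame_def using Vlin by blast
qed

end



context Setting begin

lemma backward:
  assumes FF: "F_frame X ns T tn g"
  shows "\<exists>f. DF_bessel X ns T tn f \<and> F_reconstructs X ns g f"
proof -
  have "\<exists>V. lin_on TF V \<and> (\<forall>c\<in>TF. V c \<in> XF) \<and> (\<forall>s. \<exists>K. \<forall>c\<in>TF. ns s (V c) \<le> K * tn s c)
      \<and> (\<forall>x\<in>XF. V (\<lambda>i. g i x) = x)"
    using FF unfolding F_frame_def by (rule conjunct2)
  then obtain V where Vlin: "lin_on TF V" and VF': "\<forall>c\<in>TF. V c \<in> XF"
    and VK: "\<forall>s. \<exists>K. \<forall>c\<in>TF. ns s (V c) \<le> K * tn s c" and Vg': "\<forall>x\<in>XF. V (\<lambda>i. g i x) = x"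
    by (elim exE conjE)
  have VF: "\<And>c. c \<in> TF \<Longrightarrow> V c \<in> XF" using VF' by blast
  have Vg: "\<And>x. x \<in> XF \<Longrightarrow> V (\<lambda>i. g i x) = x" using Vg' by blast
  have "\<forall>s. \<exists>K\<ge>0. \<forall>c\<in>TF. ns s (V c) \<le> K * tn s c"
  proof
    fix s
    obtain K where K: "\<forall>c\<in>TF. ns s (V c) \<le> K * tn s c" using VK by blast
    have "\<forall>c\<in>TF. ns s (V c) \<le> max K 0 * tn s c"
    proof
      fix c assume c: "c \<in> TF"
      have "tn s c \<ge> 0" using n_nonneg[OF FT.N] c by blast
      then have "K * tn s c \<le> max K 0 * tn s c" by (simp add: mult_right_mono)
      then show "ns s (V c) \<le> max K 0 * tn s c" using K c by fastforce
    qed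
    then show "\<exists>K\<ge>0. \<forall>c\<in>TF. ns s (V c) \<le> K * tn s c" by (intro exI[of _ "max K 0"]) simp
  qed
  then obtain Kf where Kf0: "\<And>s. Kf s \<ge> 0" and Kf: "\<And>s c. c \<in> TF \<Longrightarrow> ns s (V c) \<le> Kf s * tn s c"
    by metis
  define f where "f = (\<lambda>i. V (unitvec i))"
  have fF: "\<And>i. f i \<in> XF" unfolding f_def using VF unitvecF by blast
  have bes: "bessel_cond (dual_on (X s) (ns s)) (opnorm (X s) (ns s)) (seqdual (T s) (tn s))
               (seqdual_norm (T s) (tn s)) (\<lambda>h i. h (f i))" for s
    unfolding bessel_cond_def
  proof (intro exI[of _ "Kf s"] ballI conjI)
    fix h assume h: "h \<in> dual_on (X s) (ns s)"
    have hlin: "lin_on (X s) h" using dualD[OF h] by blast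
    have VS: "V c \<in> X s" if "c \<in> TF" for c using VF[OF that] by blast
    have philin: "lin_on TF (\<lambda>c. h (V c))" unfolding lin_on_def
      using lin_add[OF Vlin] lin_scale[OF Vlin] lin_add[OF hlin] lin_scale[OF hlin] VS
        subsp_add[OF FT.XF_subsp] subsp_scale[OF FT.XF_subsp] by simp
    have on0: "opnorm (X s) (ns s) h \<ge> 0" using opnorm_facts(2)[OF h FX.N] .
    have phib: "\<bar>h (V c)\<bar> \<le> (opnorm (X s) (ns s) h * Kf s) * tn s c" if c: "c \<in> TF" for c
    proof -
      have "\<bar>h (V c)\<bar> \<le> opnorm (X s) (ns s) h * ns s (V c)" using opnorm_bound[OF h FX.N VS[OF c]] .
      also have "\<dots> \<le> opnorm (X s) (ns s) h * (Kf s * tn s c)" using Kf[OF c] on0 by (simp add: mult_left_mono)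
      finally show ?thesis by (simp add: mult.assoc)
    qed
    obtain G where G: "G \<in> dual_on (T s) (tn s)" "\<forall>c\<in>TF. G c = h (V c)"
      "\<forall>c\<in>T s. \<bar>G c\<bar> \<le> (opnorm (X s) (ns s) h * Kf s) * tn s c"
      using dense_ext[OF FT.N FT.XF_sub FT.XF_subsp FT.dense philin _ phib] on0 Kf0[of s] by auto
    have Gd: "\<forall>i. h (f i) = G (unitvec i)" using G(2) unitvecF unfolding f_def by simp
    show d: "(\<lambda>i. h (f i)) \<in> seqdual (T s) (tn s)" unfolding seqdual_def using G(1) Gd by blast
    define dd where "dd = (\<lambda>i. h (f i))"
    have S: "sgf (T s) (tn s) dd \<in> dual_on (T s) (tn s)" "\<And>i. dd i = sgf (T s) (tn s) dd (unitvec i)"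
      using sgf[OF d[folded dd_def]] by blast+
    have "sgf (T s) (tn s) dd = G"
    proof (rule cb_uniq[OF cb S(1) G(1)])
      fix i
      have "dd i = G (unitvec i)" unfolding dd_def using Gd by blast
      then show "sgf (T s) (tn s) dd (unitvec i) = G (unitvec i)" using S(2)[of i] by simp
    qed
    then have "seqdual_norm (T s) (tn s) (\<lambda>i. h (f i)) = opnorm (T s) (tn s) G" unfolding dd_def by (simp add: sdn_eq)
    also have "\<dots> \<le> opnorm (X s) (ns s) h * Kf s"
      by (rule opnorm_le[OF FT.N]) (use G(3) on0 Kf0[of s] in auto)
    finally show "seqdual_norm (T s) (tn s) (\<lambda>i. h (f i)) \<le> Kf s * opnorm (X s) (ns s) h" by (simp add: mult.commute)
  qed
  have "DF_bessel X ns T tn f" unfolding DF_bessel_def using fF bes by blast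
  moreover have "F_reconstructs X ns g f" unfolding F_reconstructs_def
  proof (intro ballI allI)
    fix x s assume x: "x \<in> XF"
    let ?c = "\<lambda>i. g i x"
    have c: "?c \<in> TF" using gT[OF x] .
    have l: "(\<lambda>k. tn s (?c - (\<Sum>i<k. ?c i *\<^sub>R unitvec i))) \<longlonglongrightarrow> 0"
      using cb[of s] c by (simp add: cb_space_def)
    have l2: "(\<lambda>k. Kf s * tn s (?c - (\<Sum>i<k. ?c i *\<^sub>R unitvec i))) \<longlonglongrightarrow> 0"
      using tendsto_mult[OF tendsto_const l, of "Kf s"] by (simp only: mult_zero_right)
    show "(\<lambda>n. ns s (x - (\<Sum>i<n. g i x *\<^sub>R f i))) \<longlonglongrightarrow> 0"
    proof (rule Lim_null_comparison[OF _ l2], intro always_eventually allI)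
      fix k
      have E: "(\<Sum>i<k. ?c i *\<^sub>R unitvec i) \<in> TF" by (rule psumT[OF finite_lessThan])
      have "V (\<Sum>i<k. ?c i *\<^sub>R unitvec i) = (\<Sum>i<k. ?c i *\<^sub>R V (unitvec i))"
        by (rule lin_sum[OF Vlin FT.XF_subsp]) (use unitvecF in auto)
      then have "x - (\<Sum>i<k. g i x *\<^sub>R f i) = V ?c - V (\<Sum>i<k. ?c i *\<^sub>R unitvec i)"
        using Vg[OF x] unfolding f_def by simp
      also have "\<dots> = V (?c - (\<Sum>i<k. ?c i *\<^sub>R unitvec i))" using lin_diff[OF Vlin FT.XF_subsp c E] by simp
      finally have eq: "x - (\<Sum>i<k. g i x *\<^sub>R f i) = V (?c - (\<Sum>i<k. ?c i *\<^sub>R unitvec i))" .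
      have cE: "?c - (\<Sum>i<k. ?c i *\<^sub>R unitvec i) \<in> TF" using subsp_diff[OF FT.XF_subsp c E] .
      have "ns s (x - (\<Sum>i<k. g i x *\<^sub>R f i)) \<le> Kf s * tn s (?c - (\<Sum>i<k. ?c i *\<^sub>R unitvec i))"
        unfolding eq by (rule Kf[OF cE])
      moreover have "ns s (x - (\<Sum>i<k. g i x *\<^sub>R f i)) \<ge> 0" unfolding eq using n_nonneg[OF FX.N] VF[OF cE] by blast
      ultimately show "norm (ns s (x - (\<Sum>i<k. g i x *\<^sub>R f i))) \<le> Kf s * tn s (?c - (\<Sum>i<k. ?c i *\<^sub>R unitvec i))"
        by simp
    qed
  qed
  ultimately show ?thesis by blast
qed

end



context Setting begin

lemma DF_seqdual:
  assumes DF: "DF_bessel X ns T tn f" and h: "h \<in> dual_on (X s) (ns s)"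
  shows "(\<lambda>i. h (f i)) \<in> seqdual (T s) (tn s)"
proof -
  have "bessel_cond (dual_on (X s) (ns s)) (opnorm (X s) (ns s)) (seqdual (T s) (tn s))
               (seqdual_norm (T s) (tn s)) (\<lambda>h i. h (f i))" using DF by (simp add: DF_bessel_def)
  then obtain B where "\<forall>h\<in>dual_on (X s) (ns s). (\<lambda>i. h (f i)) \<in> seqdual (T s) (tn s) \<and> seqdual_norm (T s) (tn s) (\<lambda>i. h (f i)) \<le> B * opnorm (X s) (ns s) h"
    unfolding bessel_cond_def by blast
  then show ?thesis using h by blast
qed

lemma KL:
  assumes DF: "DF_bessel X ns T tn f" and R: "F_reconstructs X ns g f"
    and h: "h \<in> dual_on (X s) (ns s)" and x: "x \<in> XF"
  shows "h x = sgf (T s) (tn s) (\<lambda>i. h (f i)) (\<lambda>i. g i x)"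
proof -
  have f: "\<And>i. f i \<in> XF" using DF by (simp add: DF_bessel_def)
  have d: "(\<lambda>i. h (f i)) \<in> seqdual (T s) (tn s)" by (rule DF_seqdual[OF DF h])
  define G where "G = sgf (T s) (tn s) (\<lambda>i. h (f i))"
  have G: "G \<in> dual_on (T s) (tn s)" using sgf[OF d, folded G_def] by blast
  let ?c = "\<lambda>i. g i x"
  have c: "?c \<in> TF" using gT[OF x] .
  define P where "P = (\<lambda>k. \<Sum>i<k. ?c i *\<^sub>R f i)"
  define E where "E = (\<lambda>k. \<Sum>i<k. ?c i *\<^sub>R unitvec i)"
  have eq: "h (P k) = G (E k)" for k
    unfolding P_def E_def G_def by (rule pairing[OF f h d finite_lessThan])
  have PX: "P k \<in> X s" for k unfolding P_def by (rule subsp_sum[OF FX.sub finite_lessThan]) (use f in blast)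
  have ET: "E k \<in> T s" for k unfolding E_def using psumT[OF finite_lessThan, of "\<lambda>i. g i x" k] by blast
  have xs: "x \<in> X s" using x by blast
  have lP: "(\<lambda>k. ns s (P k - x)) \<longlonglongrightarrow> 0"
  proof -
    have "(\<lambda>k. ns s (x - P k)) \<longlonglongrightarrow> 0" using R x unfolding F_reconstructs_def P_def by blast
    moreover have "ns s (x - P k) = ns s (P k - x)" for k using n_commute[OF FX.N xs PX] .
    ultimately show ?thesis by simp
  qed
  have lE: "(\<lambda>k. tn s (E k - ?c)) \<longlonglongrightarrow> 0" unfolding E_def by (rule esum_tendsto[OF c])
  have "(\<lambda>k. h (P k)) \<longlonglongrightarrow> h x" by (rule dual_cont[OF h FX.N xs PX lP])
  moreover have "(\<lambda>k. G (E k)) \<longlonglongrightarrow> G ?c"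
  proof -
    have cs: "?c \<in> T s" using c by blast
    show ?thesis by (rule dual_cont[OF G FT.N[of s] cs, where a = E]) (use ET lE in auto)
  qed
  ultimately have "h x = G ?c" unfolding eq using LIMSEQ_unique by blast
  then show ?thesis unfolding G_def .
qed

lemma pre:
  assumes DF: "DF_bessel X ns T tn f" and R: "F_reconstructs X ns g f"
  shows "frame_cond (dual_on (X s) (ns s)) (opnorm (X s) (ns s)) (seqdual (T s) (tn s))
           (seqdual_norm (T s) (tn s)) (\<lambda>h i. h (f i))"
proof -
  have bes: "bessel_cond (dual_on (X s) (ns s)) (opnorm (X s) (ns s)) (seqdual (T s) (tn s))
               (seqdual_norm (T s) (tn s)) (\<lambda>h i. h (f i))" using DF by (simp add: DF_bessel_def)
  obtain B where B0: "B > 0" and B: "\<forall>x\<in>XF. tn s (\<lambda>i. g i x) \<le> B * ns s x" using gB by blast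
  have "opnorm (X s) (ns s) h \<le> B * seqdual_norm (T s) (tn s) (\<lambda>i. h (f i))" if h: "h \<in> dual_on (X s) (ns s)" for h
  proof -
    have d: "(\<lambda>i. h (f i)) \<in> seqdual (T s) (tn s)" by (rule DF_seqdual[OF DF h])
    define G where "G = sgf (T s) (tn s) (\<lambda>i. h (f i))"
    have G: "G \<in> dual_on (T s) (tn s)" using sgf[OF d, folded G_def] by blast
    have oG: "opnorm (T s) (tn s) G \<ge> 0" using opnorm_facts(2)[OF G FT.N] .
    have sn: "seqdual_norm (T s) (tn s) (\<lambda>i. h (f i)) = opnorm (T s) (tn s) G" unfolding G_def by (rule sdn_eq)
    have bd: "\<bar>h x\<bar> \<le> (B * opnorm (T s) (tn s) G) * ns s x" if x: "x \<in> XF" for x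
    proof -
      have gx: "(\<lambda>i. g i x) \<in> T s" using gT[OF x] by blast
      have "\<bar>h x\<bar> = \<bar>G (\<lambda>i. g i x)\<bar>" using KL[OF DF R h x] unfolding G_def by simp
      also have "\<dots> \<le> opnorm (T s) (tn s) G * tn s (\<lambda>i. g i x)" by (rule opnorm_bound[OF G FT.N gx])
      also have "\<dots> \<le> opnorm (T s) (tn s) G * (B * ns s x)" using B x oG by (simp add: mult_left_mono)
      finally show ?thesis by (simp add: ac_simps)
    qed
    have "opnorm (X s) (ns s) h \<le> B * opnorm (T s) (tn s) G"
    proof (rule opnorm_le[OF FX.N])
      show "0 \<le> B * opnorm (T s) (tn s) G" using B0 oG by simp
      fix x assume xs: "x \<in> X s"
      note th = dense_bound[OF FX.N[of s] FX.XF_sub[of s] FX.dense[of s] h]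
      show "\<bar>h x\<bar> \<le> B * opnorm (T s) (tn s) G * ns s x"
        using th[OF bd xs] .
    qed
    then show ?thesis using sn by simp
  qed
  then have "\<forall>h\<in>dual_on (X s) (ns s). (1 / B) * opnorm (X s) (ns s) h \<le> seqdual_norm (T s) (tn s) (\<lambda>i. h (f i))"
    using B0 by (simp add: field_simps)
  then show ?thesis unfolding frame_cond_def using bes B0 by (intro conjI exI[of _ "1 / B"]) auto
qed

end



context Setting begin

lemma DFf:
  assumes DF: "DF_bessel X ns T tn f" and R: "F_reconstructs X ns g f"
  shows "banach_frame_cond (dual_on (X s) (ns s)) (opnorm (X s) (ns s)) (seqdual (T s) (tn s))
           (seqdual_norm (T s) (tn s)) (\<lambda>h i. h (f i))"
proof -
  obtain B where B0: "B > 0" and B: "\<forall>x\<in>XF. tn s (\<lambda>i. g i x) \<le> B * ns s x" using gB by blast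
  let ?SD = "seqdual (T s) (tn s)"
  let ?G = "sgf (T s) (tn s)"
  define W where "W = (\<lambda>d. SOME \<psi>. \<psi> \<in> dual_on (X s) (ns s) \<and> (\<forall>x\<in>XF. \<psi> x = ?G d (\<lambda>i. g i x))
       \<and> (\<forall>x\<in>X s. \<bar>\<psi> x\<bar> \<le> (opnorm (T s) (tn s) (?G d) * B) * ns s x))"
  have gxT: "(\<lambda>i. g i x) \<in> T s" if "x \<in> XF" for x using gT[OF that] by blast
  have Wp: "W d \<in> dual_on (X s) (ns s) \<and> (\<forall>x\<in>XF. W d x = ?G d (\<lambda>i. g i x))
       \<and> (\<forall>x\<in>X s. \<bar>W d x\<bar> \<le> (opnorm (T s) (tn s) (?G d) * B) * ns s x)" if d: "d \<in> ?SD" for d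
  proof -
    have G: "?G d \<in> dual_on (T s) (tn s)" using sgf[OF d] by blast
    have Glin: "lin_on (T s) (?G d)" using dualD[OF G] by blast
    have oG: "opnorm (T s) (tn s) (?G d) \<ge> 0" using opnorm_facts(2)[OF G FT.N] .
    have philin: "lin_on XF (\<lambda>x. ?G d (\<lambda>i. g i x))" unfolding lin_on_def
    proof (intro conjI ballI allI)
      fix x y assume x: "x \<in> XF" and y: "y \<in> XF"
      show "?G d (\<lambda>i. g i (x + y)) = ?G d (\<lambda>i. g i x) + ?G d (\<lambda>i. g i y)"
        unfolding g_add[OF x y] by (rule lin_add[OF Glin gxT[OF x] gxT[OF y]])
    next
      fix c :: real and x assume x: "x \<in> XF"
      show "?G d (\<lambda>i. g i (c *\<^sub>R x)) = c *\<^sub>R ?G d (\<lambda>i. g i x)"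
        unfolding g_scale[OF x] by (rule lin_scale[OF Glin gxT[OF x]])
    qed
    have bnd: "\<bar>?G d (\<lambda>i. g i x)\<bar> \<le> (opnorm (T s) (tn s) (?G d) * B) * ns s x" if x: "x \<in> XF" for x
    proof -
      have "\<bar>?G d (\<lambda>i. g i x)\<bar> \<le> opnorm (T s) (tn s) (?G d) * tn s (\<lambda>i. g i x)"
        by (rule opnorm_bound[OF G FT.N gxT[OF x]])
      also have "\<dots> \<le> opnorm (T s) (tn s) (?G d) * (B * ns s x)" using B x oG by (simp add: mult_left_mono)
      finally show ?thesis by (simp add: ac_simps)
    qed
    have "\<exists>\<psi>\<in>dual_on (X s) (ns s). (\<forall>x\<in>XF. \<psi> x = ?G d (\<lambda>i. g i x))
       \<and> (\<forall>x\<in>X s. \<bar>\<psi> x\<bar> \<le> (opnorm (T s) (tn s) (?G d) * B) * ns s x)"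
      by (rule dense_ext[OF FX.N[of s] FX.XF_sub[of s] FX.XF_subsp FX.dense[of s] philin _ bnd]) (use oG B0 in simp)
    then show ?thesis unfolding W_def by (rule someI2_bex) blast
  qed
  have Wuniq: "W d = \<psi>" if d: "d \<in> ?SD" and \<psi>: "\<psi> \<in> dual_on (X s) (ns s)"
    and eq: "\<And>x. x \<in> XF \<Longrightarrow> \<psi> x = ?G d (\<lambda>i. g i x)" for d \<psi>
  proof (rule dense_uniq[OF FX.N[of s] FX.XF_sub[of s] FX.dense[of s]])
    show "W d \<in> dual_on (X s) (ns s)" using Wp[OF d] by blast
    show "\<psi> \<in> dual_on (X s) (ns s)" by (rule \<psi>)
    fix x assume x: "x \<in> XF"
    show "W d x = \<psi> x" using Wp[OF d] x eq[OF x] by simp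
  qed
  have Wlin: "lin_on ?SD W" unfolding lin_on_def
  proof (intro conjI ballI allI)
    fix d1 d2 assume d1: "d1 \<in> ?SD" and d2: "d2 \<in> ?SD"
    have G1: "?G d1 \<in> dual_on (T s) (tn s)" "\<And>i. d1 i = ?G d1 (unitvec i)" using sgf[OF d1] by blast+
    have G2: "?G d2 \<in> dual_on (T s) (tn s)" "\<And>i. d2 i = ?G d2 (unitvec i)" using sgf[OF d2] by blast+
    have G12: "?G d1 + ?G d2 \<in> dual_on (T s) (tn s)" by (rule dual_add[OF G1(1) G2(1)])
    have v12: "(d1 + d2) i = (?G d1 + ?G d2) (unitvec i)" for i using G1(2)[of i] G2(2)[of i] by simp
    have d12: "d1 + d2 \<in> ?SD" unfolding seqdual_def using G12 v12 by blast
    have S12: "?G (d1 + d2) \<in> dual_on (T s) (tn s)" "\<And>i. (d1 + d2) i = ?G (d1 + d2) (unitvec i)"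
      using sgf[OF d12] by blast+
    have eqG: "?G (d1 + d2) = ?G d1 + ?G d2"
    proof (rule cb_uniq[OF cb S12(1) G12])
      fix i show "?G (d1 + d2) (unitvec i) = (?G d1 + ?G d2) (unitvec i)" using S12(2)[of i] v12[of i] by simp
    qed
    show "W (d1 + d2) = W d1 + W d2"
    proof (rule Wuniq[OF d12])
      show "W d1 + W d2 \<in> dual_on (X s) (ns s)" using dual_add Wp[OF d1] Wp[OF d2] by blast
      fix x assume x: "x \<in> XF"
      have "(W d1 + W d2) x = ?G d1 (\<lambda>i. g i x) + ?G d2 (\<lambda>i. g i x)" using Wp[OF d1] Wp[OF d2] x by simp
      then show "(W d1 + W d2) x = ?G (d1 + d2) (\<lambda>i. g i x)" unfolding eqG by simp
    qed
  next
    fix c :: real and d1 assume d1: "d1 \<in> ?SD"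
    have G1: "?G d1 \<in> dual_on (T s) (tn s)" "\<And>i. d1 i = ?G d1 (unitvec i)" using sgf[OF d1] by blast+
    have G12: "c *\<^sub>R ?G d1 \<in> dual_on (T s) (tn s)" by (rule dual_scale[OF G1(1)])
    have v12: "(c *\<^sub>R d1) i = (c *\<^sub>R ?G d1) (unitvec i)" for i using G1(2)[of i] by (simp add: scaleR_fun_def)
    have d12: "c *\<^sub>R d1 \<in> ?SD" unfolding seqdual_def using G12 v12 by blast
    have S12: "?G (c *\<^sub>R d1) \<in> dual_on (T s) (tn s)" "\<And>i. (c *\<^sub>R d1) i = ?G (c *\<^sub>R d1) (unitvec i)"
      using sgf[OF d12] by blast+
    have eqG: "?G (c *\<^sub>R d1) = c *\<^sub>R ?G d1"
    proof (rule cb_uniq[OF cb S12(1) G12])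
      fix i show "?G (c *\<^sub>R d1) (unitvec i) = (c *\<^sub>R ?G d1) (unitvec i)" using S12(2)[of i] v12[of i] by simp
    qed
    show "W (c *\<^sub>R d1) = c *\<^sub>R W d1"
    proof (rule Wuniq[OF d12])
      show "c *\<^sub>R W d1 \<in> dual_on (X s) (ns s)" using dual_scale Wp[OF d1] by blast
      fix x assume x: "x \<in> XF"
      have "(c *\<^sub>R W d1) x = c * ?G d1 (\<lambda>i. g i x)" using Wp[OF d1] x by (simp add: scaleR_fun_def)
      then show "(c *\<^sub>R W d1) x = ?G (c *\<^sub>R d1) (\<lambda>i. g i x)" unfolding eqG by (simp add: scaleR_fun_def)
    qed
  qed
  have Wd: "\<forall>d\<in>?SD. W d \<in> dual_on (X s) (ns s)" using Wp by blast
  have WK: "\<forall>d\<in>?SD. opnorm (X s) (ns s) (W d) \<le> B * seqdual_norm (T s) (tn s) d"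
  proof
    fix d assume d: "d \<in> ?SD"
    have G: "?G d \<in> dual_on (T s) (tn s)" using sgf[OF d] by blast
    have oG: "opnorm (T s) (tn s) (?G d) \<ge> 0" using opnorm_facts(2)[OF G FT.N] .
    have "opnorm (X s) (ns s) (W d) \<le> opnorm (T s) (tn s) (?G d) * B"
      by (rule opnorm_le[OF FX.N]) (use Wp[OF d] oG B0 in auto)
    then show "opnorm (X s) (ns s) (W d) \<le> B * seqdual_norm (T s) (tn s) d" by (simp add: sdn_eq mult.commute)
  qed
  have Wphi: "\<forall>h\<in>dual_on (X s) (ns s). W (\<lambda>i. h (f i)) = h"
  proof
    fix h assume h: "h \<in> dual_on (X s) (ns s)"
    show "W (\<lambda>i. h (f i)) = h"
      by (rule Wuniq[OF DF_seqdual[OF DF h] h]) (rule KL[OF DF R h])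
  qed
  show ?thesis unfolding banach_frame_cond_def
    using pre[OF DF R] Wlin Wd WK Wphi by blast
qed

end

theorem theorem3p6:
  fixes X :: "nat \<Rightarrow> 'a::real_vector set" and ns :: "nat \<Rightarrow> 'a \<Rightarrow> real"
    and T :: "nat \<Rightarrow> (nat \<Rightarrow> real) set" and tn :: "nat \<Rightarrow> (nat \<Rightarrow> real) \<Rightarrow> real"
    and g :: "nat \<Rightarrow> 'a \<Rightarrow> real"
  assumes "F_seq X ns"
    and "F_seq T tn"
    and "\<forall>s. cb_space (T s) (tn s)"
    and "F_bessel X ns T tn g"
  shows "((\<exists>f. DF_bessel X ns T tn f \<and> F_reconstructs X ns g f) \<longleftrightarrow> F_frame X ns T tn g)
    \<and> (\<forall>f. DF_bessel X ns T tn f \<and> F_reconstructs X ns g f \<longrightarrow>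
          ((\<forall>s. cb_space (seqdual (T s) (tn s)) (seqdual_norm (T s) (tn s))) \<longrightarrow> pre_DF_frame X ns T tn f)
        \<and> ((\<forall>s. reflexive_on (T s) (tn s)) \<longrightarrow> DF_frame X ns T tn f))"
proof -
  interpret S: Setting X ns T tn g
    by unfold_locales (use assms in auto)
  have a: "(\<exists>f. DF_bessel X ns T tn f \<and> F_reconstructs X ns g f) \<longleftrightarrow> F_frame X ns T tn g"
    using S.forward S.backward by blast
  have b: "((\<forall>s. cb_space (seqdual (T s) (tn s)) (seqdual_norm (T s) (tn s))) \<longrightarrow> pre_DF_frame X ns T tn f)
        \<and> ((\<forall>s. reflexive_on (T s) (tn s)) \<longrightarrow> DF_frame X ns T tn f)"
    if DF: "DF_bessel X ns T tn f" and R: "F_reconstructs X ns g f" for f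
  proof -
    have fF: "\<forall>i. f i \<in> (\<Inter>s. X s)" using DF by (simp add: DF_bessel_def)
    have "pre_DF_frame X ns T tn f" unfolding pre_DF_frame_def using fF S.pre[OF DF R] by blast
    moreover have "DF_frame X ns T tn f" unfolding DF_frame_def using fF S.DFf[OF DF R] by blast
    ultimately show ?thesis by blast
  qed
  show ?thesis using a b by blast
qed

end
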